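(* Let $T$ be a bounded, linear, self-adjoint operator on $L^2(G,\mathbb{C}^{s\times r})$ that is adjointable with respect to the matrix-valued inner product, and let $\{E_k\}_{k\in\mathbb{N}}$ be a matrix-valued orthonormal basis for $L^2(G,\mathbb{C}^{s\times r})$. Then $$\Big\{\big(I+\tfrac12\big((T^2)^{1/2}+T\big)\big)E_k\Big\}_{k\in\mathbb{N}}\quad\text{and}\quad\Big\{\big(I+\tfrac12\big((T^2)^{1/2}-T\big)\big)E_k\Big\}_{k\in\mathbb{N}}$$ are matrix-valued Riesz bases for $L^2(G,\mathbb{C}^{s\times r})$, where $I$ is the identity operator.
   Context: $G$ is a locally compact abelian group that is metrizable and $\sigma$-compact, with Haar measure $\mu_G$; $s,r\in\mathbb{N}$. $L^2(G,\mathbb{C}^{s\times r})$ is the space of $s\times r$ matrices with all entries in $L^2(G)$. The matrix-valued inner product is $\langle \mathbf{f},\mathbf{g}\rangle=\int_G \mathbf{f}(x)\mathbf{g}^*(x)\,d\mu_G\in M_s(\mathbb{C})$ (entrywise integral). $L^2(G,\mathbb{C}^{s\times r})$ is a Hilbert space with inner product $\langle \mathbf{f},\mathbf{g}\rangle_{L^2}=\mathrm{tr}\langle \mathbf{f},\mathbf{g}\rangle$ and Frobenius norm; $U^*$ denotes the Hilbert-adjoint with respect to this inner product, and self-adjoint means $T^*=T$. $U$ is adjointable with respect to the matrix-valued inner product if $\langle U\mathbf{f},\mathbf{g}\rangle=\langle\mathbf{f},U^*\mathbf{g}\rangle$ for all $\mathbf{f},\mathbf{g}$. For a positive operator $P$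 ($P^*=P$, $\mathrm{tr}\langle P\mathbf{f},\mathbf{f}\rangle\ge0$ for all $\mathbf{f}$), $P^{1/2}$ is the unique bounded positive operator whose square is $P$. A matrix-valued orthonormal basis is a sequence $\{E_k\}_{k\in\mathbb{N}}$ with $\langle E_k,E_j\rangle=\mathbf{I}_{s\times s}$ if $k=j$ and $\mathbf{O}_{s\times s}$ otherwise, such that $\mathbf{f}=\sum_k\langle\mathbf{f},E_k\rangle E_k$ in Frobenius norm for all $\mathbf{f}$. A matrix-valued Riesz basis is a family $\{VE_k\}_{k\in\mathbb{N}}$ with $\{E_k\}$ a matrix-valued orthonormal basis and $V$ bounded, linear, bijective and adjointable with respect to the matrix-valued inner product. *)

theory Defs
  imports "HOL-Analysis.Analysis"
begin

text \<open>A Haar measure on a locally compact abelian group whose topology is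
  metrizable and sigma-compact: a nonzero translation-invariant Borel measure
  that is finite on compact sets and positive on nonempty open sets (in this
  metrizable sigma-compact setting such measures are automatically Radon).\<close>

definition sigma_compact_group :: "'g::{topological_ab_group_add,t2_space} itself \<Rightarrow> bool" where
  "sigma_compact_group _ \<longleftrightarrow>
     locally_compact_space (euclidean :: 'g topology) \<and>
     metrizable_space (euclidean :: 'g topology) \<and>
     (\<exists>K :: nat \<Rightarrow> 'g set. (\<forall>n. compact (K n)) \<and> (\<Union>n. K n) = UNIV)"

definition haar_measure :: "'g::{topological_ab_group_add,t2_space} measure \<Rightarrow> bool" where
  "haar_measure M \<longleftrightarrow>
     sets M = sets borel \<and> space M = UNIV \<and>
     (\<forall>A\<in>sets borel. \<forall>a. emeasure M ((+) a ` A) = emeasure M A) \<and>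
     (\<forall>K. compact K \<longrightarrow> emeasure M K < \<infinity>) \<and>
     (\<forall>U. open U \<and> U \<noteq> {} \<longrightarrow> 0 < emeasure M U)"

definition mscale :: "complex \<Rightarrow> complex^'r^'s \<Rightarrow> complex^'r^'s" where
  "mscale c A = (\<chi> i j. c * A $ i $ j)"

definition ctrans :: "complex^'r^'s \<Rightarrow> complex^'s^'r" where
  "ctrans A = (\<chi> j i. cnj (A $ i $ j))"

definition mtrace :: "complex^'s^'s \<Rightarrow> complex" where
  "mtrace A = (\<Sum>i\<in>UNIV. A $ i $ i)"

text \<open>Elements are represented by functions G -> C^(s x r); equality in L^2
  is equality almost everywhere (aeq).\<close>

definition L2 :: "'g measure \<Rightarrow> ('g \<Rightarrow> complex^'r^'s) set" where
  "L2 M = {f. \<forall>i j. (\<lambda>x. f x $ i $ j) \<in> borel_measurable M \<and>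
                     integrable M (\<lambda>x. (cmod (f x $ i $ j))\<^sup>2)}"

definition aeq :: "'g measure \<Rightarrow> ('g \<Rightarrow> complex^'r^'s) \<Rightarrow> ('g \<Rightarrow> complex^'r^'s) \<Rightarrow> bool" where
  "aeq M f g \<longleftrightarrow> (AE x in M. f x = g x)"

definition minner :: "'g measure \<Rightarrow> ('g \<Rightarrow> complex^'r^'s) \<Rightarrow> ('g \<Rightarrow> complex^'r^'s) \<Rightarrow> complex^'s^'s" where
  "minner M f g = (\<chi> i k. LINT x|M. (f x ** ctrans (g x)) $ i $ k)"

definition hinner :: "'g measure \<Rightarrow> ('g \<Rightarrow> complex^'r^'s) \<Rightarrow> ('g \<Rightarrow> complex^'r^'s) \<Rightarrow> complex" where
  "hinner M f g = mtrace (minner M f g)"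

definition l2norm :: "'g measure \<Rightarrow> ('g \<Rightarrow> complex^'r^'s) \<Rightarrow> real" where
  "l2norm M f = sqrt (Re (hinner M f f))"

type_synonym ('g,'r,'s) op = "('g \<Rightarrow> complex^'r::finite^'s::finite) \<Rightarrow> ('g \<Rightarrow> complex^'r^'s)"

definition bounded_op :: "'g measure \<Rightarrow> (('g \<Rightarrow> complex^'r::finite^'s::finite) \<Rightarrow> ('g \<Rightarrow> complex^'r^'s)) \<Rightarrow> bool" where
  "bounded_op M T \<longleftrightarrow>
     (\<forall>f\<in>L2 M. T f \<in> L2 M) \<and>
     (\<forall>f\<in>L2 M. \<forall>g\<in>L2 M. aeq M f g \<longrightarrow> aeq M (T f) (T g)) \<and>
     (\<forall>a b. \<forall>f\<in>L2 M. \<forall>g\<in>L2 M.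
        aeq M (T (\<lambda>x. mscale a (f x) + mscale b (g x)))
              (\<lambda>x. mscale a (T f x) + mscale b (T g x))) \<and>
     (\<exists>C. \<forall>f\<in>L2 M. l2norm M (T f) \<le> C * l2norm M f)"

definition is_hadjoint :: "'g measure \<Rightarrow> (('g \<Rightarrow> complex^'r::finite^'s::finite) \<Rightarrow> ('g \<Rightarrow> complex^'r^'s)) \<Rightarrow> ('g,'r,'s) op \<Rightarrow> bool" where
  "is_hadjoint M T S \<longleftrightarrow> bounded_op M T \<and> bounded_op M S \<and>
     (\<forall>f\<in>L2 M. \<forall>g\<in>L2 M. hinner M (T f) g = hinner M f (S g))"

definition self_adjoint_op :: "'g measure \<Rightarrow> (('g \<Rightarrow> complex^'r::finite^'s::finite) \<Rightarrow> ('g \<Rightarrow> complex^'r^'s)) \<Rightarrow> bool" where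
  "self_adjoint_op M T \<longleftrightarrow> is_hadjoint M T T"

definition mat_adjointable :: "'g measure \<Rightarrow> (('g \<Rightarrow> complex^'r::finite^'s::finite) \<Rightarrow> ('g \<Rightarrow> complex^'r^'s)) \<Rightarrow> bool" where
  "mat_adjointable M U \<longleftrightarrow> (\<exists>S. is_hadjoint M U S \<and>
     (\<forall>f\<in>L2 M. \<forall>g\<in>L2 M. minner M (U f) g = minner M f (S g)))"

definition positive_op :: "'g measure \<Rightarrow> (('g \<Rightarrow> complex^'r::finite^'s::finite) \<Rightarrow> ('g \<Rightarrow> complex^'r^'s)) \<Rightarrow> bool" where
  "positive_op M P \<longleftrightarrow> self_adjoint_op M P \<and>
     (\<forall>f\<in>L2 M. Im (hinner M (P f) f) = 0 \<and> 0 \<le> Re (hinner M (P f) f))"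

definition is_op_sqrt :: "'g measure \<Rightarrow> (('g \<Rightarrow> complex^'r::finite^'s::finite) \<Rightarrow> ('g \<Rightarrow> complex^'r^'s)) \<Rightarrow> ('g,'r,'s) op \<Rightarrow> bool" where
  "is_op_sqrt M P S \<longleftrightarrow> positive_op M S \<and> (\<forall>f\<in>L2 M. aeq M (S (S f)) (P f))"

text \<open>P^(1/2): the (unique up to a.e. equality) positive square root.\<close>
definition op_sqrt :: "'g measure \<Rightarrow> (('g \<Rightarrow> complex^'r::finite^'s::finite) \<Rightarrow> ('g \<Rightarrow> complex^'r^'s)) \<Rightarrow> ('g,'r,'s) op" where
  "op_sqrt M P = (SOME S. is_op_sqrt M P S)"

definition bij_op :: "'g measure \<Rightarrow> (('g \<Rightarrow> complex^'r::finite^'s::finite) \<Rightarrow> ('g \<Rightarrow> complex^'r^'s)) \<Rightarrow> bool" where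
  "bij_op M V \<longleftrightarrow>
     (\<forall>f\<in>L2 M. \<forall>g\<in>L2 M. aeq M (V f) (V g) \<longrightarrow> aeq M f g) \<and>
     (\<forall>g\<in>L2 M. \<exists>f\<in>L2 M. aeq M (V f) g)"

definition mat_onb :: "'g measure \<Rightarrow> (nat \<Rightarrow> 'g \<Rightarrow> complex^'r^'s) \<Rightarrow> bool" where
  "mat_onb M E \<longleftrightarrow>
     (\<forall>k. E k \<in> L2 M) \<and>
     (\<forall>k j. minner M (E k) (E j) = (if k = j then mat 1 else 0)) \<and>
     (\<forall>f\<in>L2 M. (\<lambda>n. l2norm M (\<lambda>x. f x - (\<Sum>k<n. minner M f (E k) ** E k x)))
                   \<longlonglongrightarrow> 0)"

definition mat_riesz_basis :: "'g measure \<Rightarrow> (nat \<Rightarrow> 'g \<Rightarrow> complex^'r^'s) \<Rightarrow> bool" where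
  "mat_riesz_basis M F \<longleftrightarrow> (\<exists>E V. mat_onb M E \<and> bounded_op M V \<and> bij_op M V \<and>
     mat_adjointable M V \<and> (\<forall>k. aeq M (F k) (V (E k))))"

end

theory Submission
  imports Defs "HOL-Analysis.Analysis" "HOL-Computational_Algebra.Formal_Power_Series"
begin


typedef (overloaded) 'a bop = "UNIV :: ('a::real_normed_vector \<Rightarrow>\<^sub>L 'a) set"
  morphisms bl Bop by simp

setup_lifting type_definition_bop

instantiation bop :: (real_normed_vector) "{real_normed_vector}"
begin
lift_definition norm_bop :: "'a bop \<Rightarrow> real" is norm .
lift_definition zero_bop :: "'a bop" is 0 .
lift_definition plus_bop :: "'a bop \<Rightarrow> 'a bop \<Rightarrow> 'a bop" is "(+)" .
lift_definition minus_bop :: "'a bop \<Rightarrow> 'a bop \<Rightarrow> 'a bop" is "(-)" .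
lift_definition uminus_bop :: "'a bop \<Rightarrow> 'a bop" is "uminus" .
lift_definition scaleR_bop :: "real \<Rightarrow> 'a bop \<Rightarrow> 'a bop" is "scaleR" .
definition dist_bop :: "'a bop \<Rightarrow> 'a bop \<Rightarrow> real" where "dist_bop a b = norm (a - b)"
definition sgn_bop :: "'a bop \<Rightarrow> 'a bop" where "sgn_bop x = scaleR (inverse (norm x)) x"
definition uniformity_bop :: "('a bop \<times> 'a bop) filter" where
  "uniformity_bop = (INF e\<in>{0 <..}. principal {(x, y). dist x y < e})"
definition open_bop :: "'a bop set \<Rightarrow> bool"
  where "open_bop S = (\<forall>x\<in>S. \<forall>\<^sub>F (x', y) in uniformity. x' = x \<longrightarrow> y \<in> S)"
instance
  apply standard
  unfolding dist_bop_def open_bop_def sgn_bop_def uniformity_bop_def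
  apply (rule refl | (transfer, simp add: norm_triangle_ineq algebra_simps))+
  done
end

lemma norm_bl: "norm (bl A) = norm A" by transfer simp
lemma bl_add: "bl (A + B) = bl A + bl B" by transfer simp
lemma bl_diff: "bl (A - B) = bl A - bl B" by transfer simp
lemma bl_scaleR: "bl (r *\<^sub>R A) = r *\<^sub>R bl A" by transfer simp
lemma bl_zero: "bl 0 = 0" by transfer simp
lemma bl_uminus: "bl (- A) = - bl A" by transfer simp

lemma bounded_linear_bl: "bounded_linear bl"
  by (rule bounded_linear_intro[where K=1]) (auto simp: bl_add bl_scaleR norm_bl)

instance bop :: (banach) banach
proof
  fix X :: "nat \<Rightarrow> 'a bop" assume "Cauchy X"
  then have "Cauchy (\<lambda>n. bl (X n))"
    unfolding Cauchy_def dist_norm by (simp add: bl_diff[symmetric] norm_bl)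
  then obtain L where L: "(\<lambda>n. bl (X n)) \<longlonglongrightarrow> L" using Cauchy_convergent_iff convergent_def by blast
  have e: "dist (X n) (Bop L) = dist (bl (X n)) L" for n
    unfolding dist_norm by (simp add: norm_bl[symmetric] bl_diff Bop_inverse)
  have "X \<longlonglongrightarrow> Bop L"
    using L unfolding tendsto_iff e .
  then show "convergent X" unfolding convergent_def by blast
qed

instantiation bop :: (real_normed_vector) "{ring, monoid_mult, real_normed_algebra}"
begin
lift_definition times_bop :: "'a bop \<Rightarrow> 'a bop \<Rightarrow> 'a bop" is "blinfun_compose" .
lift_definition one_bop :: "'a bop" is "id_blinfun" .
instance
  apply standard
  apply (transfer, rule blinfun_eqI, simp add: blinfun.bilinear_simps)+
  apply (transfer, simp add: norm_blinfun_compose)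
  done
end

definition app :: "'a::real_normed_vector bop \<Rightarrow> 'a \<Rightarrow> 'a" (infixr "$$" 90)
  where "app A x = blinfun_apply (bl A) x"

lemma app_mult[simp]: "(A * B) $$ x = A $$ (B $$ x)"
  unfolding app_def by transfer simp
lemma app_one[simp]: "1 $$ x = x"
  unfolding app_def by transfer simp
lemma app_add[simp]: "(A + B) $$ x = A $$ x + B $$ x"
  unfolding app_def by transfer (simp add: blinfun.add_left)
lemma app_diff[simp]: "(A - B) $$ x = A $$ x - B $$ x"
  unfolding app_def by transfer (simp add: blinfun.diff_left)
lemma app_scaleR[simp]: "(r *\<^sub>R A) $$ x = r *\<^sub>R (A $$ x)"
  unfolding app_def by transfer (simp add: blinfun.scaleR_left)
lemma app_zero[simp]: "0 $$ x = 0"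
  unfolding app_def by transfer simp
lemma app_uminus[simp]: "(- A) $$ x = - (A $$ x)"
  unfolding app_def by transfer (simp add: blinfun.minus_left)
lemma bounded_linear_app: "bounded_linear (\<lambda>x. A $$ x)"
  unfolding app_def by (simp add: blinfun.bounded_linear_right)
lemma app_linear_simps[simp]: "A $$ (x + y) = A $$ x + A $$ y" "A $$ (x - y) = A $$ x - A $$ y"
  "A $$ (r *\<^sub>R x) = r *\<^sub>R (A $$ x)" "A $$ 0 = 0" "A $$ (- x) = - (A $$ x)"
  unfolding app_def by (simp_all add: blinfun.add_right blinfun.diff_right blinfun.scaleR_right blinfun.minus_right)
lemma norm_app: "norm (A $$ x) \<le> norm A * norm x"
  unfolding app_def by (metis norm_bl norm_blinfun)
lemma bop_eqI: "(\<And>x. A $$ x = B $$ x) \<Longrightarrow> A = B"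
  unfolding app_def by (metis bl_inject blinfun_eqI)
lemma bounded_bilinear_app: "bounded_bilinear (\<lambda>A x. A $$ x)"
  unfolding app_def
  using bounded_bilinear.comp1[OF bounded_bilinear_blinfun_apply bounded_linear_bl] .

lift_definition mkop :: "('a::real_normed_vector \<Rightarrow> 'a) \<Rightarrow> 'a bop" is "Blinfun" .
lemma app_mkop: "bounded_linear f \<Longrightarrow> mkop f $$ x = f x"
  unfolding app_def by transfer (simp add: bounded_linear_Blinfun_apply)

lemma norm_bop_bound: "0 \<le> b \<Longrightarrow> (\<And>x. norm (A $$ x) \<le> b * norm x) \<Longrightarrow> norm A \<le> b"
  unfolding app_def by (metis norm_bl norm_blinfun_bound)


definition sqc :: "nat \<Rightarrow> real" where "sqc n = (-1)^n * ((1/2::real) gchoose n)"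

lemma sqc_0[simp]: "sqc 0 = 1" by (simp add: sqc_def)
lemma sqc_1[simp]: "sqc (Suc 0) = -1/2" by (simp add: sqc_def)

lemma sqc_rec: "real (Suc n) * sqc (Suc n) = (real n - 1/2) * sqc n"
proof -
  have "fact (Suc n) * ((1/2::real) gchoose Suc n) = (\<Prod>i = 0..<Suc n. 1/2 - of_nat i)"
    by (rule gbinomial_mult_fact)
  also have "\<dots> = (\<Prod>i = 0..<n. 1/2 - of_nat i) * (1/2 - real n)" by simp
  also have "(\<Prod>i = 0..<n. 1/2 - of_nat i) = fact n * ((1/2::real) gchoose n)"
    by (rule gbinomial_mult_fact[symmetric])
  finally have "fact n * (real (Suc n) * ((1/2::real) gchoose Suc n)) = fact n * (((1/2::real) gchoose n) * (1/2 - real n))"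
    by (simp only: fact_Suc of_nat_mult) (simp add: algebra_simps)
  then have "real (Suc n) * ((1/2::real) gchoose Suc n) = ((1/2::real) gchoose n) * (1/2 - real n)"
    by simp
  then have e: "(real n - 1/2) * ((1/2::real) gchoose n) = - (real (Suc n) * ((1/2::real) gchoose Suc n))"
    by (simp add: algebra_simps)
  have "real (Suc n) * sqc (Suc n) = (-1)^n * (- (real (Suc n) * ((1/2::real) gchoose Suc n)))"
    by (simp add: sqc_def)
  also have "\<dots> = (-1)^n * ((real n - 1/2) * ((1/2::real) gchoose n))" by (simp only: e)
  also have "\<dots> = (real n - 1/2) * sqc n" by (simp add: sqc_def)
  finally show ?thesis .
qed

lemma sqc_nonpos: "n \<ge> 1 \<Longrightarrow> sqc n \<le> 0"
proof (induction n rule: nat_induct_at_least)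
  case base then show ?case by (simp add: sqc_1)
next
  case (Suc n)
  have "real (Suc n) * sqc (Suc n) \<le> 0"
    unfolding sqc_rec using Suc by (intro mult_nonneg_nonpos) auto
  then show ?case by (simp add: mult_le_0_iff)
qed

lemma sqc_partial: "(\<Sum>n<N. \<bar>sqc (Suc n)\<bar>) \<le> 1"
proof -
  define b where "b n = - sqc n" for n
  have b0: "n \<ge> 1 \<Longrightarrow> b n \<ge> 0" for n using sqc_nonpos by (simp add: b_def)
  have rec: "real n * b n - real (Suc n) * b (Suc n) = b n / 2" for n
    using sqc_rec[of n] by (simp add: b_def algebra_simps)
  have "(\<Sum>n<N. b (Suc n)) = 2 * (b 1 - real (Suc N) * b (Suc N))"
  proof (induction N)
    case 0 then show ?case by simp
  next
    case (Suc N)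
    then show ?case using rec[of "Suc N"] by (simp add: algebra_simps)
  qed
  also have "\<dots> \<le> 2 * b 1" using b0[of "Suc N"] by simp
  also have "\<dots> = 1" by (simp add: b_def sqc_1)
  finally show ?thesis using b0 by (simp add: b_def abs_of_nonpos sqc_nonpos)
qed

lemma summable_sqc: "summable (\<lambda>n. \<bar>sqc (Suc n)\<bar>)"
  by (rule summableI_nonneg_bounded[where x=1]) (use sqc_partial in auto)

lemma suminf_sqc: "(\<Sum>n. \<bar>sqc (Suc n)\<bar>) \<le> 1"
  by (rule suminf_le_const[OF summable_sqc]) (use sqc_partial in auto)

lemma summable_sqc_all: "summable (\<lambda>n. \<bar>sqc n\<bar>)"
  using summable_sqc summable_Suc_iff[of "\<lambda>n. \<bar>sqc n\<bar>"] by simp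

lemma sqc_cauchy: "(\<Sum>k\<le>n. sqc k * sqc (n - k)) = (if n = 0 then 1 else if n = 1 then -1 else 0)"
proof -
  have "(\<Sum>k\<le>n. sqc k * sqc (n - k)) = (-1)^n * (\<Sum>k\<le>n. ((1/2::real) gchoose k) * ((1/2) gchoose (n - k)))"
    unfolding sqc_def sum_distrib_left
    by (intro sum.cong refl) (auto simp: power_add[symmetric])
  also have "(\<Sum>k\<le>n. ((1/2::real) gchoose k) * ((1/2) gchoose (n - k))) = (1::real) gchoose n"
    using gbinomial_Vandermonde[of "1/2::real" "1/2" n] by (simp add: atMost_atLeast0)
  also have "(1::real) gchoose n = of_nat (1 choose n)"
    using binomial_gbinomial[of 1 n, where 'a=real] by simp
  finally show ?thesis
    by (cases n) (auto simp: binomial_eq_0)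
qed


definition sa :: "'h::{real_inner,banach} bop \<Rightarrow> bool" where
  "sa A \<longleftrightarrow> (\<forall>x y. inner (A $$ x) y = inner x (A $$ y))"

definition pos :: "'h::{real_inner,banach} bop \<Rightarrow> bool" where
  "pos A \<longleftrightarrow> sa A \<and> (\<forall>x. 0 \<le> inner (A $$ x) x)"

definition invop :: "'h::{real_inner,banach} bop \<Rightarrow> bool" where
  "invop A \<longleftrightarrow> (\<exists>B. A * B = 1 \<and> B * A = 1)"

lemma quad_nonneg_disc:
  fixes a b c :: real
  assumes "\<And>t. 0 \<le> a + 2 * t * b + t^2 * c"
  shows "b^2 \<le> a * c"
proof (cases "c = 0")
  case True
  show ?thesis
  proof (rule ccontr)
    assume "\<not> ?thesis"
    then have "b \<noteq> 0" using True by auto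
    have "0 \<le> a + 2 * (- (a + 1) / (2 * b)) * b" using assms[of "- (a + 1) / (2 * b)"] True by simp
    also have "\<dots> = -1" using \<open>b \<noteq> 0\<close> by (simp add: field_simps)
    finally show False by simp
  qed
next
  case False
  have c0: "c \<ge> 0"
  proof (rule ccontr)
    assume "\<not> c \<ge> 0"
    then have cn: "c < 0" by simp
    define t where "t = (\<bar>a\<bar> + 2 * \<bar>b\<bar> + 1) / (- c) + 1"
    have "(\<bar>a\<bar> + 2 * \<bar>b\<bar> + 1) / (- c) \<ge> 0" by (rule divide_nonneg_pos) (use cn in auto)
    then have t1: "t \<ge> 1" by (simp add: t_def)
    have "t * (- c) \<ge> \<bar>a\<bar> + 2 * \<bar>b\<bar> + 1" using cn
      by (simp add: t_def field_simps)
    then have h: "t * (\<bar>a\<bar> + 2 * \<bar>b\<bar> + 1) \<le> t * (t * (- c))" using t1 by (intro mult_left_mono) auto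
    then have "t^2 * (- c) \<ge> t * (\<bar>a\<bar> + 2 * \<bar>b\<bar> + 1)"
      by (simp add: power2_eq_square algebra_simps)
    moreover have "t * (\<bar>a\<bar> + 2 * \<bar>b\<bar> + 1) \<ge> \<bar>a\<bar> + 2 * t * \<bar>b\<bar> + 1"
    proof -
      have "1 * \<bar>a\<bar> \<le> t * \<bar>a\<bar>" using t1 by (intro mult_right_mono) auto
      then show ?thesis using t1 by (simp add: algebra_simps)
    qed
    moreover have "a + 2 * t * b \<le> \<bar>a\<bar> + 2 * t * \<bar>b\<bar>"
    proof -
      have "t * b \<le> t * \<bar>b\<bar>" using t1 by (intro mult_left_mono) auto
      then show ?thesis by linarith
    qed
    ultimately have "a + 2 * t * b + t^2 * c < 0" by simp
    with assms[of t] show False by simp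
  qed
  with False have cp: "c > 0" by simp
  have "0 \<le> a + 2 * (- b / c) * b + (- b / c)^2 * c" by (rule assms)
  also have "\<dots> = a - b^2 / c" using cp by (simp add: field_simps power2_eq_square)
  finally show ?thesis using cp by (simp add: field_simps)
qed

lemma pos_cs:
  assumes "pos A"
  shows "(inner (A $$ x) y)^2 \<le> inner (A $$ x) x * inner (A $$ y) y"
proof -
  have sa: "inner (A $$ u) v = inner u (A $$ v)" for u v using assms by (simp add: pos_def sa_def)
  have "0 \<le> inner (A $$ x) x + 2 * t * inner (A $$ x) y + t^2 * inner (A $$ y) y" for t
  proof -
    have "0 \<le> inner (A $$ (x + t *\<^sub>R y)) (x + t *\<^sub>R y)" using assms unfolding pos_def by blast
    also have "\<dots> = inner (A $$ x) x + t * inner (A $$ x) y + t * inner (A $$ y) x + t^2 * inner (A $$ y) y"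
      by (simp add: inner_add_left inner_add_right power2_eq_square algebra_simps)
    also have "inner (A $$ y) x = inner (A $$ x) y" using sa[of y x] by (simp add: inner_commute)
    finally show ?thesis by simp
  qed
  then show ?thesis by (rule quad_nonneg_disc)
qed

lemma pos_zero:
  assumes "pos A" "inner (A $$ x) x = 0"
  shows "A $$ x = 0"
proof -
  have "(inner (A $$ x) (A $$ x))^2 \<le> 0" using pos_cs[OF assms(1), of x "A $$ x"] assms(2) by simp
  then show ?thesis by simp
qed

lemma pos_norm_le:
  assumes "pos A" "0 \<le> q" "\<And>x. inner (A $$ x) x \<le> q * (norm x)^2"
  shows "norm A \<le> q"
proof (rule norm_bop_bound[OF assms(2)])
  fix x
  show "norm (A $$ x) \<le> q * norm x"
  proof (cases "A $$ x = 0")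
    case True then show ?thesis using assms(2) by simp
  next
    case False
    have "(norm (A $$ x))^2 * (norm (A $$ x))^2 = (inner (A $$ x) (A $$ x))^2"
      by (simp add: power2_norm_eq_inner[symmetric] power2_eq_square)
    also have "\<dots> \<le> inner (A $$ x) x * inner (A $$ (A $$ x)) (A $$ x)" by (rule pos_cs[OF assms(1)])
    also have "\<dots> \<le> (q * (norm x)^2) * (q * (norm (A $$ x))^2)"
      apply (rule mult_mono[OF assms(3) assms(3)])
      using assms(1) assms(2) by (auto simp: pos_def)
    also have "\<dots> = (q * norm x)^2 * (norm (A $$ x))^2"
      by (simp add: power2_eq_square algebra_simps)
    finally have "(norm (A $$ x))^2 * (norm (A $$ x))^2 \<le> (q * norm x)^2 * (norm (A $$ x))^2" .
    moreover have np: "(norm (A $$ x))^2 > 0" using False by simp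
    ultimately have "(norm (A $$ x))^2 \<le> (q * norm x)^2" by (rule mult_right_le_imp_le)
    then show ?thesis using assms(2) by (simp add: power2_le_iff_abs_le)
  qed
qed

lemma norm_one_bop: "norm (1 :: 'a::real_normed_vector bop) \<le> 1"
  by (rule norm_bop_bound) auto

lemma norm_power_bop: "norm ((Y :: 'a::real_normed_vector bop) ^ n) \<le> norm Y ^ n"
proof (induction n)
  case 0 then show ?case using norm_one_bop by simp
next
  case (Suc n)
  have "norm (Y ^ Suc n) \<le> norm Y * norm (Y ^ n)" by (simp add: norm_mult_ineq)
  also have "\<dots> \<le> norm Y * norm Y ^ n" by (rule mult_left_mono[OF Suc]) simp
  finally show ?case by simp
qed

lemma neumann:
  fixes Y :: "'a::banach bop"
  assumes "norm Y < 1"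
  shows "(1 - Y) * (\<Sum>n. Y^n) = 1" "(\<Sum>n. Y^n) * (1 - Y) = 1"
proof -
  have sn: "summable (\<lambda>n. norm (Y^n))"
    by (rule summable_comparison_test[OF _ summable_geometric[of "norm Y"]])
       (use assms norm_power_bop in auto)
  then have s: "summable (\<lambda>n. Y^n)" by (rule summable_norm_cancel)
  have z: "(\<lambda>n. Y^n) \<longlonglongrightarrow> 0"
  proof -
    have "(\<lambda>n. norm Y ^ n) \<longlonglongrightarrow> 0" using assms by (simp add: LIMSEQ_realpow_zero)
    then show ?thesis
      by (rule Lim_null_comparison[rotated]) (auto simp: norm_power_bop)
  qed
  have t: "(\<lambda>n. Y^n - Y^(Suc n)) sums (Y^0 - 0)" by (rule telescope_sums'[OF z])
  have "(1 - Y) * (\<Sum>n. Y^n) = (\<Sum>n. (1 - Y) * Y^n)" by (rule suminf_mult[OF s, symmetric])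
  also have "\<dots> = (\<Sum>n. Y^n - Y^(Suc n))" by (simp add: algebra_simps)
  also have "\<dots> = 1" using t sums_unique by fastforce
  finally show "(1 - Y) * (\<Sum>n. Y^n) = 1" .
  have "(\<Sum>n. Y^n) * (1 - Y) = (\<Sum>n. Y^n * (1 - Y))" by (rule suminf_mult2[OF s])
  also have "\<dots> = (\<Sum>n. Y^n - Y^(Suc n))" by (simp add: algebra_simps power_commutes)
  also have "\<dots> = 1" using t sums_unique by fastforce
  finally show "(\<Sum>n. Y^n) * (1 - Y) = 1" .
qed


lemma sa_add: "sa A \<Longrightarrow> sa B \<Longrightarrow> sa (A + B)"
  by (simp add: sa_def inner_add_left inner_add_right)
lemma sa_scaleR: "sa A \<Longrightarrow> sa (r *\<^sub>R A)"
  by (simp add: sa_def)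
lemma sa_one: "sa 1" by (simp add: sa_def)
lemma sa_diff: "sa A \<Longrightarrow> sa B \<Longrightarrow> sa (A - B)"
  by (simp add: sa_def inner_diff_left inner_diff_right)
lemma sa_mult_comm: "sa A \<Longrightarrow> sa B \<Longrightarrow> A * B = B * A \<Longrightarrow> sa (A * B)"
  unfolding sa_def by (metis app_mult)
lemma sa_power: "sa A \<Longrightarrow> sa (A ^ n)"
  by (induction n) (auto simp: sa_one power_commutes intro!: sa_mult_comm)

lemma bl_inner_app: "bounded_linear (\<lambda>A. inner (A $$ x) y)"
  using bounded_linear_compose[OF bounded_linear_inner_left bounded_bilinear.bounded_linear_left[OF bounded_bilinear_app]] .
lemma bl_inner_app2: "bounded_linear (\<lambda>A. inner x (A $$ y))"
  using bounded_linear_compose[OF bounded_linear_inner_right bounded_bilinear.bounded_linear_left[OF bounded_bilinear_app]] .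

lemma sa_suminf:
  assumes "summable F" "\<And>n. sa (F n)"
  shows "sa (suminf F)"
  unfolding sa_def
proof (intro allI)
  fix x y
  have "inner (suminf F $$ x) y = (\<Sum>n. inner (F n $$ x) y)"
    using bounded_linear.suminf[OF bl_inner_app assms(1)] by simp
  also have "\<dots> = (\<Sum>n. inner x (F n $$ y))" using assms(2) by (simp add: sa_def)
  also have "\<dots> = inner x (suminf F $$ y)"
    using bounded_linear.suminf[OF bl_inner_app2 assms(1)] by simp
  finally show "inner (suminf F $$ x) y = inner x (suminf F $$ y)" .
qed

lemma comm_power: fixes U :: "'a::monoid_mult" shows "U * X = X * U \<Longrightarrow> U * X ^ n = X ^ n * U"
proof (induction n)
  case 0 then show ?case by simp
next
  case (Suc n)
  have "U * X ^ Suc n = (U * X) * X ^ n" by (simp add: mult.assoc)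
  also have "\<dots> = X * (U * X ^ n)" using Suc by (simp add: mult.assoc)
  also have "\<dots> = X ^ Suc n * U" using Suc by (simp add: mult.assoc)
  finally show ?case .
qed

lemma comm_suminf:
  fixes F :: "nat \<Rightarrow> 'a::banach bop"
  assumes "summable F" "\<And>n. U * F n = F n * U"
  shows "U * suminf F = suminf F * U"
  using suminf_mult[OF assms(1), of U] suminf_mult2[OF assms(1), of U] assms(2) by simp

lemma inner_app_le: "inner (A $$ x) x \<le> norm A * (norm x)^2"
proof -
  have "inner (A $$ x) x \<le> norm (A $$ x) * norm x" by (rule norm_cauchy_schwarz)
  also have "\<dots> \<le> norm A * norm x * norm x" by (rule mult_right_mono[OF norm_app]) simp
  finally show ?thesis by (simp add: power2_eq_square mult.assoc)
qed

lemma abs_inner_app_le: "\<bar>inner (A $$ x) x\<bar> \<le> norm A * (norm x)^2"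
proof -
  have "\<bar>inner (A $$ x) x\<bar> \<le> norm (A $$ x) * norm x" by (rule Cauchy_Schwarz_ineq2)
  also have "\<dots> \<le> norm A * norm x * norm x" by (rule mult_right_mono[OF norm_app]) simp
  finally show ?thesis by (simp add: power2_eq_square mult.assoc)
qed

lemma sqrt_exists:
  fixes T :: "'h::{real_inner,banach} bop"
  assumes saT: "sa T"
  shows "\<exists>R. pos R \<and> R * R = T * T \<and> (\<forall>U. U * (T * T) = (T * T) * U \<longrightarrow> U * R = R * U)"
proof -
  define c where "c = norm T + 1"
  have c0: "c > 0" by (simp add: c_def add_nonneg_pos)
  define X where "X = 1 - (1 / c^2) *\<^sub>R (T * T)"
  have saX: "sa X" unfolding X_def
    by (intro sa_diff sa_one sa_scaleR sa_mult_comm saT) simp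
  have iX: "inner (X $$ x) x = (norm x)^2 - (norm (T $$ x))^2 / c^2" for x
  proof -
    have "inner ((T * T) $$ x) x = inner (T $$ x) (T $$ x)" using saT by (simp add: sa_def)
    then show ?thesis by (simp add: X_def inner_diff_left power2_norm_eq_inner)
  qed
  have Tx: "(norm (T $$ x))^2 \<le> c^2 * (norm x)^2" for x
  proof -
    have "norm (T $$ x) \<le> c * norm x"
      using norm_app[of T x] c_def by (smt (verit) mult_right_mono norm_ge_zero)
    then have "(norm (T $$ x))^2 \<le> (c * norm x)^2" by (rule power_mono) simp
    then show ?thesis by (simp add: power_mult_distrib)
  qed
  have posX: "pos X"
    unfolding pos_def using saX
  proof (intro conjI allI)
    fix x
    have "(norm (T $$ x))^2 / c^2 \<le> (norm x)^2" using Tx[of x] c0 by (simp add: field_simps)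
    then show "0 \<le> inner (X $$ x) x" by (simp add: iX)
  qed simp
  have nX: "norm X \<le> 1"
    by (rule pos_norm_le[OF posX]) (auto simp: iX)
  have nXn: "norm (X ^ n) \<le> 1" for n
    using norm_power_bop[of X n] nX by (meson order_trans power_le_one norm_ge_zero)
  define A where "A n = sqc n *\<^sub>R X ^ n" for n
  have nA: "norm (A n) \<le> \<bar>sqc n\<bar>" for n
    using nXn[of n] by (simp add: A_def mult_left_le)
  have sA: "summable (\<lambda>n. norm (A n))"
    by (rule summable_comparison_test[OF _ summable_sqc_all]) (use nA in auto)
  then have sA': "summable A" by (rule summable_norm_cancel)
  define P where "P = suminf A"
  have saP: "sa P" unfolding P_def
    by (rule sa_suminf[OF sA']) (simp add: A_def sa_scaleR sa_power saX)
  have posP: "pos P"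
    unfolding pos_def using saP
  proof (intro conjI allI)
    fix x
    define f where "f n = inner (A n $$ x) x" for n
    have sf: "summable f" unfolding f_def by (rule bounded_linear.summable[OF bl_inner_app sA'])
    have Pf: "inner (P $$ x) x = suminf f"
      unfolding P_def f_def using bounded_linear.suminf[OF bl_inner_app sA'] by simp
    have f0: "f 0 = (norm x)^2" by (simp add: f_def A_def power2_norm_eq_inner)
    have fS: "- (\<bar>sqc (Suc n)\<bar> * (norm x)^2) \<le> f (Suc n)" for n
    proof -
      have "\<bar>f (Suc n)\<bar> \<le> norm (A (Suc n)) * (norm x)^2" unfolding f_def by (rule abs_inner_app_le)
      also have "\<dots> \<le> \<bar>sqc (Suc n)\<bar> * (norm x)^2" by (rule mult_right_mono[OF nA]) simp
      finally show ?thesis by linarith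
    qed
    have s2: "summable (\<lambda>n. - (\<bar>sqc (Suc n)\<bar> * (norm x)^2))"
      using summable_sqc by (intro summable_minus summable_mult2)
    have "(\<Sum>n. - (\<bar>sqc (Suc n)\<bar> * (norm x)^2)) \<le> (\<Sum>n. f (Suc n))"
      by (rule suminf_le[OF fS s2]) (use sf summable_Suc_iff in blast)
    moreover have "(\<Sum>n. - (\<bar>sqc (Suc n)\<bar> * (norm x)^2)) = - ((\<Sum>n. \<bar>sqc (Suc n)\<bar>) * (norm x)^2)"
      using summable_sqc by (simp add: suminf_minus suminf_mult2 summable_mult2)
    moreover have "(\<Sum>n. \<bar>sqc (Suc n)\<bar>) * (norm x)^2 \<le> 1 * (norm x)^2"
      by (rule mult_right_mono[OF suminf_sqc]) simp
    moreover have "(\<Sum>n. f (Suc n)) = suminf f - f 0" by (rule suminf_split_head[OF sf])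
    ultimately show "0 \<le> inner (P $$ x) x" using Pf f0 by linarith
  qed simp
  define R where "R = c *\<^sub>R P"
  have posR: "pos R" using posP c0 by (simp add: R_def pos_def sa_scaleR)
  have PP: "P * P = 1 - X"
  proof -
    have "P * P = (\<Sum>n. \<Sum>i\<le>n. A i * A (n - i))" unfolding P_def by (rule Cauchy_product[OF sA sA])
    also have "\<dots> = (\<Sum>n. (if n = 0 then 1 else if n = 1 then -1 else 0) *\<^sub>R X ^ n)"
    proof (rule suminf_cong)
      fix n
      have "(\<Sum>i\<le>n. A i * A (n - i)) = (\<Sum>i\<le>n. (sqc i * sqc (n - i)) *\<^sub>R X ^ n)"
        by (rule sum.cong) (auto simp: A_def power_add[symmetric])
      also have "\<dots> = (\<Sum>i\<le>n. sqc i * sqc (n - i)) *\<^sub>R X ^ n" by (simp add: scaleR_sum_left)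
      finally show "(\<Sum>i\<le>n. A i * A (n - i)) = (if n = 0 then 1 else if n = 1 then -1 else 0) *\<^sub>R X ^ n"
        by (simp add: sqc_cauchy)
    qed
    also have "\<dots> = (\<Sum>n\<in>{0,1}. (if n = 0 then 1 else if n = 1 then -1 else 0) *\<^sub>R X ^ n)"
      by (rule suminf_finite) auto
    also have "\<dots> = 1 - X" by simp
    finally show ?thesis .
  qed
  have RR: "R * R = T * T"
  proof -
    have "R * R = (c * c) *\<^sub>R (P * P)" by (simp add: R_def)
    also have "\<dots> = (c * c) *\<^sub>R ((1 / c^2) *\<^sub>R (T * T))" by (simp add: PP X_def)
    also have "\<dots> = T * T" using c0 by (simp add: power2_eq_square)
    finally show ?thesis .
  qed
  have comm: "U * R = R * U" if U: "U * (T * T) = (T * T) * U" for U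
  proof -
    have "U * X = X * U" using U by (simp add: X_def algebra_simps)
    then have "U * A n = A n * U" for n by (simp add: A_def comm_power)
    then have "U * P = P * U" unfolding P_def by (rule comm_suminf[OF sA'])
    then show ?thesis by (simp add: R_def)
  qed
  show ?thesis using posR RR comm by blast
qed

lemma sqrt_unique:
  assumes pS: "pos S" and pR: "pos R" and eq: "S * S = R * R" and cm: "S * R = R * S"
  shows "S = R"
proof (rule bop_eqI)
  fix x
  define g where "g = (S - R) $$ x"
  have z: "(S + R) * (S - R) = 0" using eq cm by (simp add: algebra_simps)
  have "((S + R) * (S - R)) $$ x = S $$ g + R $$ g" by (simp add: g_def)
  then have "inner (S $$ g) g + inner (R $$ g) g = inner (((S + R) * (S - R)) $$ x) g"
    by (metis inner_add_left)
  also have "\<dots> = 0" using z by simp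
  finally have s0: "inner (S $$ g) g + inner (R $$ g) g = 0" .
  have "inner (S $$ g) g \<ge> 0" "inner (R $$ g) g \<ge> 0" using pS pR by (auto simp: pos_def)
  then have "inner (S $$ g) g = 0" "inner (R $$ g) g = 0" using s0 by linarith+
  then have S0: "S $$ g = 0" and R0: "R $$ g = 0" using pos_zero pS pR by blast+
  have "sa (S - R)" using pS pR by (intro sa_diff) (auto simp: pos_def)
  then have "inner ((S - R) $$ x) g = inner x ((S - R) $$ g)" unfolding sa_def by blast
  then have "inner g g = inner x ((S - R) $$ g)" unfolding g_def[symmetric] .
  also have "\<dots> = 0" using S0 R0 by simp
  finally have "g = 0" by simp
  then show "S $$ x = R $$ x" by (simp add: g_def)
qed

lemma inv_comm:
  fixes A :: "'a::monoid_mult"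
  assumes "A * B = 1" "B * A = 1" "U * A = A * U"
  shows "U * B = B * U"
proof -
  have "U * B = (B * A) * U * B" using assms(2) by simp
  also have "\<dots> = B * (U * A) * B" using assms(3) by (simp add: mult.assoc)
  also have "\<dots> = B * U" using assms(1) by (simp add: mult.assoc)
  finally show ?thesis .
qed

lemma one_plus_pos_inv:
  fixes S :: "'h::{real_inner,banach} bop"
  assumes pS: "pos S"
  shows "\<exists>B. (1 + S) * B = 1 \<and> B * (1 + S) = 1"
proof -
  define c where "c = norm S"
  have c0: "c \<ge> 0" by (simp add: c_def)
  define Y where "Y = (c / (1 + c)) *\<^sub>R 1 - (1 / (1 + c)) *\<^sub>R S"
  have iY: "inner (Y $$ x) x = (c * (norm x)^2 - inner (S $$ x) x) / (1 + c)" for x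
    using c0 by (simp add: Y_def inner_diff_left power2_norm_eq_inner diff_divide_distrib)
  have posY: "pos Y"
    unfolding pos_def
  proof (intro conjI allI)
    show "sa Y" unfolding Y_def using pS by (intro sa_diff sa_scaleR sa_one) (auto simp: pos_def)
    fix x
    have "inner (S $$ x) x \<le> c * (norm x)^2" unfolding c_def by (rule inner_app_le)
    then show "0 \<le> inner (Y $$ x) x" using c0 by (simp add: iY)
  qed
  have nY: "norm Y \<le> c / (1 + c)"
  proof (rule pos_norm_le[OF posY])
    show "0 \<le> c / (1 + c)" using c0 by simp
    fix x
    have "inner (S $$ x) x \<ge> 0" using pS by (simp add: pos_def)
    then show "inner (Y $$ x) x \<le> c / (1 + c) * (norm x)^2"
      using c0 by (simp add: iY divide_right_mono)
  qed
  have "c / (1 + c) < 1" using c0 by simp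
  then have nY1: "norm Y < 1" using nY by linarith
  have cc: "(c + c * c) / (1 + c) = c" using c0 by (simp add: field_simps)
  have e: "1 + S = (1 + c) *\<^sub>R (1 - Y)"
    using c0 cc by (simp add: Y_def algebra_simps scaleR_diff_right)
  define B where "B = (1 / (1 + c)) *\<^sub>R (\<Sum>n. Y ^ n)"
  have "(1 + S) * B = 1" unfolding e B_def using neumann(1)[OF nY1] c0 by simp
  moreover have "B * (1 + S) = 1" unfolding e B_def using neumann(2)[OF nY1] c0 by simp
  ultimately show ?thesis by blast
qed

lemma half_half_bop: "(1/2) *\<^sub>R A + (1/2) *\<^sub>R A = (A :: 'a::real_vector)"
proof -
  have "(1/2) *\<^sub>R A + (1/2) *\<^sub>R A = ((1/2) + (1/2)) *\<^sub>R A" by (rule scaleR_add_left[symmetric])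
  then show ?thesis by simp
qed

theorem abstract_main:
  fixes T S :: "'h::{real_inner,banach} bop"
  assumes saT: "sa T" and pS: "pos S" and SS: "S * S = T * T"
  shows "\<And>U. U * T = T * U \<Longrightarrow> U * S = S * U"
    and "invop (1 + (1/2) *\<^sub>R (S + T))" and "invop (1 + (1/2) *\<^sub>R (S - T))"
proof -
  obtain R where pR: "pos R" and RR: "R * R = T * T" and cR: "\<And>U. U * (T * T) = (T * T) * U \<Longrightarrow> U * R = R * U"
    using sqrt_exists[OF saT] by blast
  have "S * (T * T) = (T * T) * S" unfolding SS[symmetric] by (simp add: mult.assoc)
  then have "S * R = R * S" by (rule cR)
  then have SR: "S = R" using sqrt_unique[OF pS pR] SS RR by simp
  show cU: "U * S = S * U" if "U * T = T * U" for U
  proof -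
    have "U * (T * T) = (T * T) * U" using that by (metis mult.assoc)
    then show ?thesis using cR SR by simp
  qed
  have ST: "S * T = T * S" by (rule cU[symmetric]) simp
  obtain B where B1: "(1 + S) * B = 1" and B2: "B * (1 + S) = 1" using one_plus_pos_inv[OF pS] by blast
  have VV: "(1 + (1/2) *\<^sub>R (S + T)) * (1 + (1/2) *\<^sub>R (S - T)) = 1 + S"
           "(1 + (1/2) *\<^sub>R (S - T)) * (1 + (1/2) *\<^sub>R (S + T)) = 1 + S"
    using SS ST by (simp_all add: algebra_simps scaleR_add_right scaleR_diff_right half_half_bop)
  have c1: "(1 + (1/2) *\<^sub>R (S + T)) * (1 + S) = (1 + S) * (1 + (1/2) *\<^sub>R (S + T))"
    using ST by (simp add: algebra_simps)
  have c2: "(1 + (1/2) *\<^sub>R (S - T)) * (1 + S) = (1 + S) * (1 + (1/2) *\<^sub>R (S - T))"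
    using ST by (simp add: algebra_simps)
  have cb1: "(1 + (1/2) *\<^sub>R (S + T)) * B = B * (1 + (1/2) *\<^sub>R (S + T))" by (rule inv_comm[OF B1 B2 c1])
  have cb2: "(1 + (1/2) *\<^sub>R (S - T)) * B = B * (1 + (1/2) *\<^sub>R (S - T))" by (rule inv_comm[OF B1 B2 c2])
  show "invop (1 + (1/2) *\<^sub>R (S + T))" unfolding invop_def
  proof (intro exI conjI)
    show "(1 + (1/2) *\<^sub>R (S + T)) * ((1 + (1/2) *\<^sub>R (S - T)) * B) = 1"
      by (simp only: mult.assoc[symmetric] VV B1)
    show "((1 + (1/2) *\<^sub>R (S - T)) * B) * (1 + (1/2) *\<^sub>R (S + T)) = 1"
      by (simp only: mult.assoc cb1[symmetric]) (simp only: mult.assoc[symmetric] VV B1)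
  qed
  show "invop (1 + (1/2) *\<^sub>R (S - T))" unfolding invop_def
  proof (intro exI conjI)
    show "(1 + (1/2) *\<^sub>R (S - T)) * ((1 + (1/2) *\<^sub>R (S + T)) * B) = 1"
      by (simp only: mult.assoc[symmetric] VV B1)
    show "((1 + (1/2) *\<^sub>R (S + T)) * B) * (1 + (1/2) *\<^sub>R (S - T)) = 1"
      by (simp only: mult.assoc cb2[symmetric]) (simp only: mult.assoc[symmetric] VV B1)
  qed
qed


definition sqi :: "'a measure \<Rightarrow> ('a \<Rightarrow> 'b::{banach,second_countable_topology}) \<Rightarrow> bool" where
  "sqi M f \<longleftrightarrow> f \<in> borel_measurable M \<and> integrable M (\<lambda>x. (norm (f x))\<^sup>2)"

lemma norm_add_sq_le: "(norm (a + b))\<^sup>2 \<le> 2 * (norm a)\<^sup>2 + 2 * (norm (b::'b::real_normed_vector))\<^sup>2"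
proof -
  have "(norm (a + b))\<^sup>2 \<le> (norm a + norm b)\<^sup>2" by (rule power_mono[OF norm_triangle_ineq]) simp
  also have "\<dots> \<le> 2 * (norm a)\<^sup>2 + 2 * (norm b)\<^sup>2"
  proof -
    have sq: "0 \<le> (norm a - norm b) * (norm a - norm b)" by simp
    then show ?thesis by (simp add: power2_eq_square algebra_simps)
  qed
  finally show ?thesis .
qed

lemma sqi_add: "sqi M f \<Longrightarrow> sqi M g \<Longrightarrow> sqi M (\<lambda>x. f x + g x)"
  unfolding sqi_def
proof (elim conjE, intro conjI)
  assume [measurable]: "f \<in> borel_measurable M" "g \<in> borel_measurable M"
    and i: "integrable M (\<lambda>x. (norm (f x))\<^sup>2)" "integrable M (\<lambda>x. (norm (g x))\<^sup>2)"
  show "(\<lambda>x. f x + g x) \<in> borel_measurable M" by measurable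
  show "integrable M (\<lambda>x. (norm (f x + g x))\<^sup>2)"
    by (rule Bochner_Integration.integrable_bound[where f="\<lambda>x. 2 * (norm (f x))\<^sup>2 + 2 * (norm (g x))\<^sup>2"])
       (use i norm_add_sq_le in auto)
qed

lemma sqi_scaleR: "sqi M f \<Longrightarrow> sqi M (\<lambda>x. c *\<^sub>R f x)"
  unfolding sqi_def by (auto simp: power_mult_distrib)

lemma sqi_uminus: "sqi M f \<Longrightarrow> sqi M (\<lambda>x. - f x)"
  unfolding sqi_def by auto

lemma sqi_diff: "sqi M f \<Longrightarrow> sqi M g \<Longrightarrow> sqi M (\<lambda>x. f x - g x)"
  using sqi_add[of M f "\<lambda>x. - g x"] sqi_uminus[of M g] by simp

lemma sqi_zero: "sqi M (\<lambda>x. 0)"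
  unfolding sqi_def by simp

theorem sqi_complete:
  fixes F :: "nat \<Rightarrow> 'a \<Rightarrow> 'b::{banach,second_countable_topology}"
  assumes sF: "\<And>n. sqi M (F n)"
    and C: "\<And>e. e > 0 \<Longrightarrow> \<exists>N. \<forall>i\<ge>N. \<forall>j\<ge>N. (LINT x|M. (norm (F i x - F j x))\<^sup>2) < e"
  shows "\<exists>f. sqi M f \<and> (\<lambda>n. LINT x|M. (norm (F n x - f x))\<^sup>2) \<longlonglongrightarrow> 0"
proof -
  have mF[measurable]: "F n \<in> borel_measurable M" for n using sF by (simp add: sqi_def)
  have iF: "integrable M (\<lambda>x. (norm (F i x - F j x))\<^sup>2)" for i j
    using sqi_diff[OF sF sF] by (simp add: sqi_def)
  have "\<exists>r. \<forall>n. (\<forall>i\<ge>r n. \<forall>j\<ge> r n. (LINT x|M. (norm (F i x - F j x))\<^sup>2) < (1 / 4) ^ n) \<and> (r (Suc n) > r n)"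
  proof (intro dependent_nat_choice, goal_cases)
    case 1
    then show ?case using C[of 1] by auto
  next
    case (2 x n)
    obtain N where *: "(LINT x|M. (norm (F i x - F j x))\<^sup>2) < (1 / 4) ^ Suc n" if "i \<ge> N" "j \<ge> N" for i j
      using C[of "(1 / 4) ^ Suc n"] by auto
    show ?case by (rule exI[of _ "max N (Suc x)"]) (use * in auto)
  qed
  then obtain r where smr: "strict_mono r"
    and rr: "\<And>n i j. i \<ge> r n \<Longrightarrow> j \<ge> r n \<Longrightarrow> (LINT x|M. (norm (F i x - F j x))\<^sup>2) < (1 / 4) ^ n"
    using strict_mono_Suc_iff by blast
  define D where "D i x = F (r (Suc i)) x - F (r i) x" for i x
  have mD[measurable]: "D i \<in> borel_measurable M" for i unfolding D_def by measurable
  have iD: "integrable M (\<lambda>x. (norm (D i x))\<^sup>2)" for i unfolding D_def by (rule iF)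
  have lD: "(LINT x|M. (norm (D i x))\<^sup>2) < (1/4)^i" for i
    unfolding D_def by (rule rr) (use smr in \<open>auto intro: less_imp_le simp: strict_mono_def\<close>)
  define a where "a i = 2^i * (LINT x|M. (norm (D i x))\<^sup>2)" for i :: nat
  have a0: "0 \<le> a i" for i unfolding a_def by (simp add: integral_nonneg_AE)
  have aa: "a i \<le> (1/2)^i" for i
  proof -
    have "a i \<le> 2^i * (1/4)^i" unfolding a_def using lD[of i] by (intro mult_left_mono) auto
    also have "\<dots> = (1/2)^i" by (simp add: power_mult_distrib[symmetric])
    finally show ?thesis .
  qed
  have sa: "summable a"
    by (rule summable_comparison_test[OF _ summable_geometric[of "1/2::real"]]) (use a0 aa in auto)
  define g where "g x = (\<Sum>i. ennreal (2^i * (norm (D i x))\<^sup>2))" for x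
  have mg: "g \<in> borel_measurable M" unfolding g_def by measurable
  have "(\<integral>\<^sup>+x. g x \<partial>M) = (\<Sum>i. \<integral>\<^sup>+x. ennreal (2^i * (norm (D i x))\<^sup>2) \<partial>M)"
    unfolding g_def by (rule nn_integral_suminf) measurable
  also have "\<dots> = (\<Sum>i. ennreal (a i))"
  proof (rule suminf_cong)
    fix i
    show "(\<integral>\<^sup>+x. ennreal (2^i * (norm (D i x))\<^sup>2) \<partial>M) = ennreal (a i)"
      unfolding a_def by (subst nn_integral_eq_integral) (use iD in auto)
  qed
  also have "\<dots> = ennreal (suminf a)" by (rule suminf_ennreal_eq[OF a0 summable_sums[OF sa]])
  finally have "(\<integral>\<^sup>+x. g x \<partial>M) < \<infinity>" by simp
  then have "AE x in M. g x < \<infinity>" by (rule finite_nn_integral_imp_ae_finite[OF mg])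
  moreover have "Cauchy (\<lambda>i. F (r i) x)" if gx: "g x < \<infinity>" for x
  proof -
    have s1: "summable (\<lambda>i. 2^i * (norm (D i x))\<^sup>2)"
      using gx unfolding g_def by (intro summable_suminf_not_top) auto
    have bnd: "norm (D i x) \<le> (1/2)^i + 2^i * (norm (D i x))\<^sup>2" for i
    proof -
      define t where "t = norm (D i x)"
      define h where "h = (1/2::real)^i"
      have h0: "h > 0" by (simp add: h_def)
      have h2: "2^i * h = 1" by (simp add: h_def power_mult_distrib[symmetric])
      have sq: "0 \<le> (h - t) * (h - t)" by simp
      have ht: "0 \<le> h * t" using h0 by (simp add: t_def)
      from sq have "2 * (h * t) \<le> h * h + t * t" by (simp add: algebra_simps)
      with ht have "h * t \<le> h * h + t * t" by linarith
      have "h * (2^i * t^2) = (2^i * h) * (t * t)" by (simp add: power2_eq_square algebra_simps)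
      then have e: "h * (2^i * t^2) = t * t" using h2 by simp
      then have "h * t \<le> h * (h + 2^i * t^2)" using \<open>h * t \<le> h * h + t * t\<close> by (simp add: distrib_left)
      then have "t \<le> h + 2^i * t^2" using h0 by simp
      then show ?thesis by (simp add: t_def h_def)
    qed
    have s2: "summable (\<lambda>i. norm (D i x))"
      by (rule summable_comparison_test[OF _ summable_add[OF summable_geometric[of "1/2::real"] s1]])
         (use bnd in auto)
    then have sD: "summable (\<lambda>i. D i x)" by (rule summable_norm_cancel)
    have "(\<lambda>n. \<Sum>i<n. D i x) \<longlonglongrightarrow> (\<Sum>i. D i x)" using summable_LIMSEQ[OF sD] .
    moreover have "(\<lambda>n. \<Sum>i<n. D i x) = (\<lambda>n. F (r n) x - F (r 0) x)"
      unfolding D_def by (intro ext) (rule sum_lessThan_telescope[of "\<lambda>n. F (r n) x"])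
    ultimately have "(\<lambda>n. F (r n) x - F (r 0) x + F (r 0) x) \<longlonglongrightarrow> (\<Sum>i. D i x) + F (r 0) x"
      by (intro tendsto_add) auto
    then have "convergent (\<lambda>n. F (r n) x)" unfolding convergent_def by auto
    then show ?thesis by (rule convergent_Cauchy)
  qed
  ultimately have aeC: "AE x in M. Cauchy (\<lambda>i. F (r i) x)" by auto
  define f where "f x = lim (\<lambda>i. F (r i) x)" for x
  have mf[measurable]: "f \<in> borel_measurable M" unfolding f_def by measurable
  have aeL: "AE x in M. (\<lambda>i. F (r i) x) \<longlonglongrightarrow> f x"
    using aeC by eventually_elim (simp add: f_def Cauchy_convergent_iff convergent_LIMSEQ_iff)
  have key: "(\<integral>\<^sup>+x. ennreal ((norm (F n x - f x))\<^sup>2) \<partial>M) \<le> ennreal e"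
    if e: "e > 0" and N: "\<And>i j. i \<ge> N \<Longrightarrow> j \<ge> N \<Longrightarrow> (LINT x|M. (norm (F i x - F j x))\<^sup>2) < e"
      and n: "n \<ge> N" for e N n
  proof -
    have "(\<integral>\<^sup>+x. ennreal ((norm (F n x - f x))\<^sup>2) \<partial>M)
        = (\<integral>\<^sup>+x. liminf (\<lambda>i. ennreal ((norm (F n x - F (r i) x))\<^sup>2)) \<partial>M)"
    proof (rule nn_integral_cong_AE)
      show "AE x in M. ennreal ((norm (F n x - f x))\<^sup>2) = liminf (\<lambda>i. ennreal ((norm (F n x - F (r i) x))\<^sup>2))"
        using aeL
      proof eventually_elim
        case (elim x)
        have "(\<lambda>i. ennreal ((norm (F n x - F (r i) x))\<^sup>2)) \<longlonglongrightarrow> ennreal ((norm (F n x - f x))\<^sup>2)"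
          by (intro tendsto_ennrealI tendsto_intros elim)
        then show ?case by (rule sym[OF lim_imp_Liminf[OF trivial_limit_sequentially]])
      qed
    qed
    also have "\<dots> \<le> liminf (\<lambda>i. \<integral>\<^sup>+x. ennreal ((norm (F n x - F (r i) x))\<^sup>2) \<partial>M)"
      by (rule nn_integral_liminf) measurable
    also have "\<dots> \<le> ennreal e"
    proof (rule Liminf_le)
      show "eventually (\<lambda>i. (\<integral>\<^sup>+x. ennreal ((norm (F n x - F (r i) x))\<^sup>2) \<partial>M) \<le> ennreal e) sequentially"
        unfolding eventually_sequentially
      proof (intro exI allI impI)
        fix i assume "N \<le> i"
        then have "r i \<ge> N" using smr seq_suble[OF smr, of i] by linarith
        then have "(LINT x|M. (norm (F n x - F (r i) x))\<^sup>2) < e" using N n by blast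
        then show "(\<integral>\<^sup>+x. ennreal ((norm (F n x - F (r i) x))\<^sup>2) \<partial>M) \<le> ennreal e"
          by (subst nn_integral_eq_integral) (use iF in \<open>auto intro: ennreal_leI\<close>)
      qed
    qed simp
    finally show ?thesis .
  qed
  obtain N1 where N1: "\<And>i j. i \<ge> N1 \<Longrightarrow> j \<ge> N1 \<Longrightarrow> (LINT x|M. (norm (F i x - F j x))\<^sup>2) < 1"
    using C[of 1] by auto
  have fin: "(\<integral>\<^sup>+x. ennreal ((norm (F n x - f x))\<^sup>2) \<partial>M) < \<infinity>" if "n \<ge> N1" for n
    using key[OF _ N1 that] by (simp add: order_le_less_trans)
  have intd: "integrable M (\<lambda>x. (norm (F n x - f x))\<^sup>2)" if "n \<ge> N1" for n
    by (rule integrableI_bounded) (use fin[OF that] in auto)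
  have sqd: "sqi M (\<lambda>x. F n x - f x)" if "n \<ge> N1" for n
    unfolding sqi_def using intd[OF that] by auto
  have sqf: "sqi M f"
    using sqi_diff[OF sF[of N1] sqd[of N1]] by simp
  have "(\<lambda>n. LINT x|M. (norm (F n x - f x))\<^sup>2) \<longlonglongrightarrow> 0"
  proof (rule LIMSEQ_I)
    fix e :: real assume e: "e > 0"
    obtain N where N: "\<And>i j. i \<ge> N \<Longrightarrow> j \<ge> N \<Longrightarrow> (LINT x|M. (norm (F i x - F j x))\<^sup>2) < e / 2"
      using C[of "e/2"] e by auto
    show "\<exists>no. \<forall>n\<ge>no. norm ((LINT x|M. (norm (F n x - f x))\<^sup>2) - 0) < e"
    proof (intro exI allI impI)
      fix n assume n: "max N N1 \<le> n"
      have "ennreal (LINT x|M. (norm (F n x - f x))\<^sup>2) = (\<integral>\<^sup>+x. ennreal ((norm (F n x - f x))\<^sup>2) \<partial>M)"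
        by (subst nn_integral_eq_integral) (use intd n in auto)
      also have "\<dots> \<le> ennreal (e / 2)" by (rule key) (use e N n in auto)
      finally have "(LINT x|M. (norm (F n x - f x))\<^sup>2) \<le> e / 2"
        using e by (simp add: ennreal_le_iff)
      moreover have "(LINT x|M. (norm (F n x - f x))\<^sup>2) \<ge> 0" by (simp add: integral_nonneg_AE)
      ultimately show "norm ((LINT x|M. (norm (F n x - f x))\<^sup>2) - 0) < e" using e by simp
    qed
  qed
  then show ?thesis using sqf by blast
qed


lemma meas_bl: "bounded_linear g \<Longrightarrow> f \<in> borel_measurable M \<Longrightarrow> (\<lambda>x. g (f x)) \<in> borel_measurable M"
  by (rule measurable_compose[OF _ borel_measurable_continuous_onI]) (auto intro: linear_continuous_on)

lemma meas_cnj[measurable]: "f \<in> borel_measurable M \<Longrightarrow> (\<lambda>x. cnj (f x)) \<in> borel_measurable M"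
  by (rule meas_bl[OF bounded_linear_cnj])

lemma meas_nth[measurable]: "(f :: 'a \<Rightarrow> 'b::real_normed_vector^'n) \<in> borel_measurable M \<Longrightarrow> (\<lambda>x. f x $ i) \<in> borel_measurable M"
  by (rule meas_bl[OF bounded_linear_vec_nth])

lemma meas_vec:
  fixes f :: "'a \<Rightarrow> 'b::euclidean_space^'n"
  assumes m: "\<And>i. (\<lambda>x. f x $ i) \<in> borel_measurable M"
  shows "f \<in> borel_measurable M"
  unfolding borel_measurable_euclidean_space[where f=f]
proof
  fix b :: "'b^'n" assume "b \<in> Basis"
  then obtain i u where b: "b = axis i u" "u \<in> Basis" by (auto simp: Basis_vec_def)
  have [measurable]: "(\<lambda>x. f x $ i) \<in> borel_measurable M" by (rule m)
  have "(\<lambda>x. f x $ i \<bullet> u) \<in> borel_measurable M" by measurable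
  then show "(\<lambda>x. f x \<bullet> b) \<in> borel_measurable M" by (simp add: b inner_axis)
qed

lemma norm_sq_vec: "(norm (x :: 'b::real_normed_vector^'n))\<^sup>2 = (\<Sum>i\<in>UNIV. (norm (x $ i))\<^sup>2)"
  unfolding norm_vec_def L2_set_def by (simp add: sum_nonneg)

lemma norm_sq_mat: "(norm (A :: complex^'r^'s))\<^sup>2 = (\<Sum>i\<in>UNIV. \<Sum>j\<in>UNIV. (cmod (A $ i $ j))\<^sup>2)"
  by (simp add: norm_sq_vec)

lemma sqi_cmult: "sqi M h \<Longrightarrow> sqi M (\<lambda>x. c * (h x :: complex))"
  unfolding sqi_def by (auto simp: norm_mult power_mult_distrib)

lemma sqi_sum: "finite K \<Longrightarrow> (\<And>k. k \<in> K \<Longrightarrow> sqi M (F k)) \<Longrightarrow> sqi M (\<lambda>x. \<Sum>k\<in>K. F k x)"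
  by (induction K rule: finite_induct) (auto intro: sqi_add sqi_zero)

lemma L2_iff_entries: "f \<in> L2 M \<longleftrightarrow> (\<forall>i j. sqi M (\<lambda>x. f x $ i $ j))"
  unfolding L2_def sqi_def by simp

lemma L2_sqi: "f \<in> L2 M \<longleftrightarrow> sqi M (f :: 'a \<Rightarrow> complex^'r^'s)"
proof
  assume f: "f \<in> L2 M"
  then have e: "sqi M (\<lambda>x. f x $ i $ j)" for i j by (simp add: L2_iff_entries)
  have "f \<in> borel_measurable M"
    by (intro meas_vec) (use e in \<open>auto simp: sqi_def\<close>)
  moreover have "integrable M (\<lambda>x. (norm (f x))\<^sup>2)"
    unfolding norm_sq_mat using e by (auto simp: sqi_def)
  ultimately show "sqi M f" by (simp add: sqi_def)
next
  assume f: "sqi M f"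
  then have [measurable]: "f \<in> borel_measurable M" and i: "integrable M (\<lambda>x. (norm (f x))\<^sup>2)"
    by (auto simp: sqi_def)
  have "sqi M (\<lambda>x. f x $ i $ j)" for i j
    unfolding sqi_def
  proof
    show "(\<lambda>x. f x $ i $ j) \<in> borel_measurable M" by measurable
    show "integrable M (\<lambda>x. (norm (f x $ i $ j))\<^sup>2)"
    proof (rule Bochner_Integration.integrable_bound[OF i])
      show "(\<lambda>x. (norm (f x $ i $ j))\<^sup>2) \<in> borel_measurable M" by measurable
      have "norm (f x $ i $ j) \<le> norm (f x)" for x
      proof -
        have "norm (f x $ i $ j) \<le> norm (f x $ i)" by (rule Finite_Cartesian_Product.norm_nth_le)
        also have "\<dots> \<le> norm (f x)" by (rule Finite_Cartesian_Product.norm_nth_le)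
        finally show ?thesis .
      qed
      then show "AE x in M. norm ((norm (f x $ i $ j))\<^sup>2) \<le> norm ((norm (f x))\<^sup>2)"
        by (auto intro!: power_mono)
    qed
  qed
  then show "f \<in> L2 M" by (simp add: L2_iff_entries)
qed

lemma L2_add: "f \<in> L2 M \<Longrightarrow> g \<in> L2 M \<Longrightarrow> (\<lambda>x. f x + g x) \<in> L2 M"
  by (simp add: L2_sqi sqi_add)
lemma L2_diff: "f \<in> L2 M \<Longrightarrow> g \<in> L2 M \<Longrightarrow> (\<lambda>x. f x - g x) \<in> L2 M"
  by (simp add: L2_sqi sqi_diff)
lemma L2_zero: "(\<lambda>x. 0) \<in> L2 M"
  by (simp add: L2_sqi sqi_zero)
lemma L2_mult: "f \<in> L2 M \<Longrightarrow> (\<lambda>x. A ** f x) \<in> L2 M"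
  unfolding L2_iff_entries matrix_matrix_mult_def
  by (auto intro!: sqi_sum sqi_cmult)
lemma L2_mscale: "f \<in> L2 M \<Longrightarrow> (\<lambda>x. mscale c (f x)) \<in> L2 M"
  unfolding L2_iff_entries mscale_def by (auto intro!: sqi_cmult)
lemma L2_sum: "finite K \<Longrightarrow> (\<And>k. k \<in> K \<Longrightarrow> F k \<in> L2 M) \<Longrightarrow> (\<lambda>x. \<Sum>k\<in>K. F k x) \<in> L2 M"
  by (induction K rule: finite_induct) (auto intro: L2_add L2_zero)

lemma intprod:
  assumes a: "sqi M a" and b: "sqi M b"
  shows "integrable M (\<lambda>x. a x * cnj (b x :: complex))"
proof -
  have [measurable]: "a \<in> borel_measurable M" "b \<in> borel_measurable M" using a b by (auto simp: sqi_def)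
  have i: "integrable M (\<lambda>x. (cmod (a x))\<^sup>2 + (cmod (b x))\<^sup>2)" using a b by (auto simp: sqi_def)
  show ?thesis
  proof (rule Bochner_Integration.integrable_bound[OF i])
    show "(\<lambda>x. a x * cnj (b x)) \<in> borel_measurable M" by measurable
    have "cmod (a x) * cmod (b x) \<le> (cmod (a x))\<^sup>2 + (cmod (b x))\<^sup>2" for x
    proof -
      have sq: "0 \<le> (cmod (a x) - cmod (b x)) * (cmod (a x) - cmod (b x))" by simp
      have s: "2 * (cmod (a x) * cmod (b x)) \<le> cmod (a x) * cmod (a x) + cmod (b x) * cmod (b x)"
        using sq by (simp add: algebra_simps)
      have "0 \<le> cmod (a x) * cmod (b x)" by simp
      then show ?thesis using s unfolding power2_eq_square by linarith
    qed
    then show "AE x in M. norm (a x * cnj (b x)) \<le> norm ((cmod (a x))\<^sup>2 + (cmod (b x))\<^sup>2)"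
      by (auto simp: norm_mult)
  qed
qed

lemma intprod_L2: "f \<in> L2 M \<Longrightarrow> g \<in> L2 M \<Longrightarrow> integrable M (\<lambda>x. f x $ i $ j * cnj (g x $ k $ l))"
  by (rule intprod) (auto simp: L2_iff_entries)

lemma ctrans_nth[simp]: "ctrans A $ j $ i = cnj (A $ i $ j)"
  by (simp add: ctrans_def)

lemma ctrans_ctrans[simp]: "ctrans (ctrans A) = A"
  by (simp add: ctrans_def vec_eq_iff)

lemma ctrans_mult: "ctrans (A ** B) = ctrans B ** ctrans A"
  by (simp add: ctrans_def matrix_matrix_mult_def vec_eq_iff mult.commute)

lemma ctrans_add: "ctrans (A + B) = ctrans A + ctrans B"
  by (simp add: ctrans_def vec_eq_iff)

lemma ctrans_diff: "ctrans (A - B) = ctrans A - ctrans B"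
  by (simp add: ctrans_def vec_eq_iff)

lemma ctrans_zero[simp]: "ctrans 0 = 0"
  by (simp add: ctrans_def vec_eq_iff)

lemma ctrans_sum: "ctrans (\<Sum>k\<in>K. A k) = (\<Sum>k\<in>K. ctrans (A k))"
  by (induction K rule: infinite_finite_induct) (auto simp: ctrans_add)

lemma minner_entry:
  assumes "f \<in> L2 M" "g \<in> L2 M"
  shows "minner M f g $ i $ k = (\<Sum>j\<in>UNIV. LINT x|M. f x $ i $ j * cnj (g x $ k $ j))"
proof -
  have "minner M f g $ i $ k = (LINT x|M. (\<Sum>j\<in>UNIV. f x $ i $ j * cnj (g x $ k $ j)))"
    by (simp add: minner_def matrix_matrix_mult_def)
  also have "\<dots> = (\<Sum>j\<in>UNIV. LINT x|M. f x $ i $ j * cnj (g x $ k $ j))"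
    by (rule Bochner_Integration.integral_sum) (rule intprod_L2[OF assms])
  finally show ?thesis .
qed

lemma minner_add_left:
  assumes "f \<in> L2 M" "g \<in> L2 M" "h \<in> L2 M"
  shows "minner M (\<lambda>x. f x + g x) h = minner M f h + minner M g h"
proof -
  have "minner M (\<lambda>x. f x + g x) h $ i $ k = minner M f h $ i $ k + minner M g h $ i $ k" for i k
    using assms L2_add[OF assms(1,2)]
    by (simp add: minner_entry distrib_right sum.distrib[symmetric] intprod_L2)
  then show ?thesis by (simp add: vec_eq_iff)
qed

lemma minner_diff_left:
  assumes "f \<in> L2 M" "g \<in> L2 M" "h \<in> L2 M"
  shows "minner M (\<lambda>x. f x - g x) h = minner M f h - minner M g h"
proof -
  have "minner M (\<lambda>x. f x - g x) h $ i $ k = minner M f h $ i $ k - minner M g h $ i $ k" for i k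
    using assms L2_diff[OF assms(1,2)]
    by (simp add: minner_entry left_diff_distrib sum_subtractf[symmetric] intprod_L2)
  then show ?thesis by (simp add: vec_eq_iff)
qed

lemma minner_mult_left:
  assumes f: "f \<in> L2 M" and h: "h \<in> L2 M"
  shows "minner M (\<lambda>x. A ** f x) h = A ** minner M f h"
proof -
  have "minner M (\<lambda>x. A ** f x) h $ i $ k = (A ** minner M f h) $ i $ k" for i k
  proof -
    have "minner M (\<lambda>x. A ** f x) h $ i $ k
        = (\<Sum>j\<in>UNIV. LINT x|M. (A ** f x) $ i $ j * cnj (h x $ k $ j))"
      by (rule minner_entry[OF L2_mult[OF f] h])
    also have "\<dots> = (\<Sum>j\<in>UNIV. LINT x|M. (\<Sum>l\<in>UNIV. A $ i $ l * (f x $ l $ j * cnj (h x $ k $ j))))"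
      by (simp add: matrix_matrix_mult_def sum_distrib_right mult.assoc)
    also have "\<dots> = (\<Sum>j\<in>UNIV. \<Sum>l\<in>UNIV. A $ i $ l * (LINT x|M. f x $ l $ j * cnj (h x $ k $ j)))"
      by (subst Bochner_Integration.integral_sum) (auto intro!: intprod_L2 f h)
    also have "\<dots> = (\<Sum>l\<in>UNIV. A $ i $ l * (\<Sum>j\<in>UNIV. LINT x|M. f x $ l $ j * cnj (h x $ k $ j)))"
      by (subst sum.swap) (simp add: sum_distrib_left)
    also have "\<dots> = (A ** minner M f h) $ i $ k"
      using f h by (simp add: minner_entry matrix_matrix_mult_def)
    finally show ?thesis .
  qed
  then show ?thesis by (simp add: vec_eq_iff)
qed

lemma minner_swap:
  assumes "f \<in> L2 M" "g \<in> L2 M"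
  shows "minner M g f = ctrans (minner M f g)"
proof -
  have "minner M g f $ i $ k = ctrans (minner M f g) $ i $ k" for i k
  proof -
    have e: "(LINT x|M. g x $ i $ j * cnj (f x $ k $ j)) = cnj (LINT x|M. f x $ k $ j * cnj (g x $ i $ j))" for j
    proof -
      have "cnj (LINT x|M. f x $ k $ j * cnj (g x $ i $ j)) = (LINT x|M. cnj (f x $ k $ j * cnj (g x $ i $ j)))"
        by (rule Bochner_Integration.integral_cnj[symmetric])
      then show ?thesis by (simp add: mult.commute)
    qed
    show ?thesis using assms by (simp add: minner_entry e cnj_sum)
  qed
  then show ?thesis by (simp add: vec_eq_iff)
qed

lemma minner_mult_right:
  assumes f: "f \<in> L2 M" and h: "h \<in> L2 M"
  shows "minner M f (\<lambda>x. A ** h x) = minner M f h ** ctrans A"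
proof -
  have "minner M f (\<lambda>x. A ** h x) = ctrans (minner M (\<lambda>x. A ** h x) f)"
    using minner_swap[OF L2_mult[OF h] f] by simp
  also have "\<dots> = ctrans (A ** minner M h f)" by (simp add: minner_mult_left[OF h f])
  also have "\<dots> = minner M f h ** ctrans A" by (simp add: ctrans_mult minner_swap[OF f h])
  finally show ?thesis .
qed

lemma minner_sum_left:
  assumes "finite K" "\<And>k. k \<in> K \<Longrightarrow> F k \<in> L2 M" "h \<in> L2 M"
  shows "minner M (\<lambda>x. \<Sum>k\<in>K. F k x) h = (\<Sum>k\<in>K. minner M (F k) h)"
  using assms
proof (induction K rule: finite_induct)
  case empty
  have "minner M (\<lambda>x. 0) h = 0" by (simp add: minner_def matrix_matrix_mult_def vec_eq_iff)
  then show ?case by simp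
next
  case (insert a K)
  have "minner M (\<lambda>x. \<Sum>k\<in>insert a K. F k x) h = minner M (\<lambda>x. F a x + (\<Sum>k\<in>K. F k x)) h"
    using insert by simp
  also have "\<dots> = minner M (F a) h + minner M (\<lambda>x. \<Sum>k\<in>K. F k x) h"
    using insert by (intro minner_add_left L2_sum) auto
  finally show ?case using insert by simp
qed

lemma minner_sum_right:
  assumes "finite K" "\<And>k. k \<in> K \<Longrightarrow> F k \<in> L2 M" "h \<in> L2 M"
  shows "minner M h (\<lambda>x. \<Sum>k\<in>K. F k x) = (\<Sum>k\<in>K. minner M h (F k))"
proof -
  have "minner M h (\<lambda>x. \<Sum>k\<in>K. F k x) = ctrans (minner M (\<lambda>x. \<Sum>k\<in>K. F k x) h)"
    using assms by (intro minner_swap L2_sum) auto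
  also have "\<dots> = (\<Sum>k\<in>K. ctrans (minner M (F k) h))" by (simp add: minner_sum_left[OF assms] ctrans_sum)
  also have "\<dots> = (\<Sum>k\<in>K. minner M h (F k))"
  proof (rule sum.cong[OF refl])
    fix k assume "k \<in> K"
    then show "ctrans (minner M (F k) h) = minner M h (F k)"
      using minner_swap[OF assms(3) assms(2)] by simp
  qed
  finally show ?thesis .
qed

lemma minner_aeq_left:
  assumes "f \<in> L2 M" "f' \<in> L2 M" "g \<in> L2 M" "aeq M f f'"
  shows "minner M f g = minner M f' g"
proof -
  have "minner M f g $ i $ k = minner M f' g $ i $ k" for i k
  proof -
    have "(LINT x|M. f x $ i $ j * cnj (g x $ k $ j)) = (LINT x|M. f' x $ i $ j * cnj (g x $ k $ j))" for j
    proof (rule integral_cong_AE)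
      show "(\<lambda>x. f x $ i $ j * cnj (g x $ k $ j)) \<in> borel_measurable M"
        using intprod_L2[OF assms(1,3)] by (rule borel_measurable_integrable)
      show "(\<lambda>x. f' x $ i $ j * cnj (g x $ k $ j)) \<in> borel_measurable M"
        using intprod_L2[OF assms(2,3)] by (rule borel_measurable_integrable)
      show "AE x in M. f x $ i $ j * cnj (g x $ k $ j) = f' x $ i $ j * cnj (g x $ k $ j)"
        using assms(4) unfolding aeq_def by eventually_elim simp
    qed
    then show ?thesis using assms by (simp add: minner_entry)
  qed
  then show ?thesis by (simp add: vec_eq_iff)
qed

lemma minner_aeq_right:
  assumes "f \<in> L2 M" "g \<in> L2 M" "g' \<in> L2 M" "aeq M g g'"
  shows "minner M f g = minner M f g'"
proof -
  have "minner M f g = ctrans (minner M g f)" using minner_swap[OF assms(2,1)] by simp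
  also have "\<dots> = ctrans (minner M g' f)" using minner_aeq_left[OF assms(2,3,1,4)] by simp
  also have "\<dots> = minner M f g'" using minner_swap[OF assms(3,1)] by simp
  finally show ?thesis .
qed

lemma mtrace_zero[simp]: "mtrace 0 = 0"
  by (simp add: mtrace_def)

lemma if0_mult: "(if P then c else 0) * (y::complex) = (if P then c * y else 0)"
  by simp

lemma mtrace_ctrans: "mtrace (ctrans A) = cnj (mtrace A)"
  by (simp add: mtrace_def)

lemma mtrace_add: "mtrace (A + B) = mtrace A + mtrace B"
  by (simp add: mtrace_def sum.distrib)

lemma mtrace_diff: "mtrace (A - B) = mtrace A - mtrace B"
  by (simp add: mtrace_def sum_subtractf)

lemma mtrace_sum: "mtrace (\<Sum>k\<in>K. A k) = (\<Sum>k\<in>K. mtrace (A k))"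
  by (induction K rule: infinite_finite_induct) (auto simp: mtrace_add)

lemma mtrace_self: "mtrace (A ** ctrans A) = of_real ((norm (A :: complex^'r^'s))\<^sup>2)"
proof -
  have "mtrace (A ** ctrans A) = (\<Sum>i\<in>UNIV. \<Sum>j\<in>UNIV. A $ i $ j * cnj (A $ i $ j))"
    by (simp add: mtrace_def matrix_matrix_mult_def)
  also have "\<dots> = (\<Sum>i\<in>UNIV. \<Sum>j\<in>UNIV. complex_of_real ((cmod (A $ i $ j))\<^sup>2))"
    by (simp only: complex_norm_square)
  also have "\<dots> = of_real (\<Sum>i\<in>UNIV. \<Sum>j\<in>UNIV. (cmod (A $ i $ j))\<^sup>2)"
    by (simp only: of_real_sum)
  finally show ?thesis by (simp add: norm_sq_mat)
qed

lemma hinner_self: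
  assumes "f \<in> L2 M"
  shows "hinner M f f = of_real (LINT x|M. (norm (f x))\<^sup>2)"
proof -
  have i: "integrable M (\<lambda>x. (cmod (f x $ i $ j))\<^sup>2)" for i j using assms by (simp add: L2_def)
  have "hinner M f f = (\<Sum>i\<in>UNIV. \<Sum>j\<in>UNIV. LINT x|M. f x $ i $ j * cnj (f x $ i $ j))"
    using assms by (simp add: hinner_def mtrace_def minner_entry)
  also have "\<dots> = (\<Sum>i\<in>UNIV. \<Sum>j\<in>UNIV. LINT x|M. complex_of_real ((cmod (f x $ i $ j))\<^sup>2))"
    by (simp only: complex_norm_square)
  also have "\<dots> = (\<Sum>i\<in>UNIV. \<Sum>j\<in>UNIV. of_real (LINT x|M. (cmod (f x $ i $ j))\<^sup>2))"
    by (simp only: integral_complex_of_real)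
  also have "\<dots> = of_real (LINT x|M. (\<Sum>i\<in>UNIV. \<Sum>j\<in>UNIV. (cmod (f x $ i $ j))\<^sup>2))"
    using i by (simp add: Bochner_Integration.integral_sum Bochner_Integration.integrable_sum)
  finally show ?thesis by (simp add: norm_sq_mat)
qed

lemma l2norm_eq:
  assumes "f \<in> L2 M"
  shows "l2norm M f = sqrt (LINT x|M. (norm (f x))\<^sup>2)"
  using assms by (simp add: l2norm_def hinner_self)

lemma l2norm_sq:
  assumes "f \<in> L2 M"
  shows "(l2norm M f)\<^sup>2 = (LINT x|M. (norm (f x))\<^sup>2)"
  using assms by (simp add: l2norm_eq integral_nonneg_AE)

lemma aeq_iff_l2norm:
  assumes "f \<in> L2 M" "g \<in> L2 M"
  shows "aeq M f g \<longleftrightarrow> l2norm M (\<lambda>x. f x - g x) = 0"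
proof -
  have d: "(\<lambda>x. f x - g x) \<in> L2 M" using assms by (rule L2_diff)
  then have i: "integrable M (\<lambda>x. (norm (f x - g x))\<^sup>2)" by (simp add: L2_sqi sqi_def)
  have "l2norm M (\<lambda>x. f x - g x) = 0 \<longleftrightarrow> (LINT x|M. (norm (f x - g x))\<^sup>2) = 0"
    using d by (simp add: l2norm_eq integral_nonneg_AE)
  also have "\<dots> \<longleftrightarrow> (AE x in M. (norm (f x - g x))\<^sup>2 = 0)"
    by (rule integral_nonneg_eq_0_iff_AE[OF i]) simp
  also have "\<dots> \<longleftrightarrow> aeq M f g" by (simp add: aeq_def)
  finally show ?thesis by simp
qed

lemma hinner_swap: "f \<in> L2 M \<Longrightarrow> g \<in> L2 M \<Longrightarrow> hinner M g f = cnj (hinner M f g)"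
  using minner_swap[of f M g] by (simp add: hinner_def mtrace_ctrans)

lemma hinner_add_left: "f \<in> L2 M \<Longrightarrow> g \<in> L2 M \<Longrightarrow> h \<in> L2 M \<Longrightarrow>
    hinner M (\<lambda>x. f x + g x) h = hinner M f h + hinner M g h"
  by (simp add: hinner_def minner_add_left mtrace_add)

lemma hinner_diff_left: "f \<in> L2 M \<Longrightarrow> g \<in> L2 M \<Longrightarrow> h \<in> L2 M \<Longrightarrow>
    hinner M (\<lambda>x. f x - g x) h = hinner M f h - hinner M g h"
  by (simp add: hinner_def minner_diff_left mtrace_diff)

lemma hinner_add_right: "f \<in> L2 M \<Longrightarrow> g \<in> L2 M \<Longrightarrow> h \<in> L2 M \<Longrightarrow>
    hinner M h (\<lambda>x. f x + g x) = hinner M h f + hinner M h g"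
  using hinner_swap[of "\<lambda>x. f x + g x" M h] hinner_swap[of f M h] hinner_swap[of g M h]
    hinner_add_left[of f M g h] L2_add[of f M g] by simp

lemma hinner_aeq_left: "f \<in> L2 M \<Longrightarrow> f' \<in> L2 M \<Longrightarrow> g \<in> L2 M \<Longrightarrow> aeq M f f' \<Longrightarrow> hinner M f g = hinner M f' g"
  by (simp add: hinner_def minner_aeq_left)

lemma hinner_aeq_right: "f \<in> L2 M \<Longrightarrow> g \<in> L2 M \<Longrightarrow> g' \<in> L2 M \<Longrightarrow> aeq M g g' \<Longrightarrow> hinner M f g = hinner M f g'"
  by (simp add: hinner_def minner_aeq_right)

lemma mscale_mat: "mscale c A = mat c ** A"
  by (simp add: mscale_def matrix_matrix_mult_def mat_def vec_eq_iff if0_mult)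

lemma mtrace_mat_mult: "mtrace (mat c ** A) = c * mtrace A"
  by (simp add: mtrace_def matrix_matrix_mult_def mat_def if0_mult sum_distrib_left)

lemma hinner_mscale_left: "f \<in> L2 M \<Longrightarrow> g \<in> L2 M \<Longrightarrow> hinner M (\<lambda>x. mscale c (f x)) g = c * hinner M f g"
  by (simp add: hinner_def mscale_mat minner_mult_left mtrace_mat_mult)

lemma hinner_mscale_right: "f \<in> L2 M \<Longrightarrow> g \<in> L2 M \<Longrightarrow> hinner M f (\<lambda>x. mscale c (g x)) = cnj c * hinner M f g"
proof -
  assume f: "f \<in> L2 M" and g: "g \<in> L2 M"
  have "hinner M f (\<lambda>x. mscale c (g x)) = cnj (hinner M (\<lambda>x. mscale c (g x)) f)"
    using hinner_swap[OF L2_mscale[OF g] f] by simp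
  also have "\<dots> = cnj c * hinner M f g"
    using f g hinner_swap[of f M g] by (simp add: hinner_mscale_left)
  finally show ?thesis .
qed

definition munit :: "'s::finite \<Rightarrow> 'a::finite \<Rightarrow> complex^'a^'s" where
  "munit b a = (\<chi> i j. if i = b \<and> j = a then 1 else 0)"

lemma mtrace_munit: "mtrace (munit b a ** X) = X $ a $ b"
proof -
  have e: "(\<Sum>k\<in>UNIV. (if i = b \<and> k = a then 1 else 0) * X $ k $ i) = (if i = b then X $ a $ b else 0)" for i
    by (cases "i = b") (simp_all add: if0_mult)
  show ?thesis by (simp add: mtrace_def munit_def matrix_matrix_mult_def e)
qed

lemma minner_via_hinner:
  "f \<in> L2 M \<Longrightarrow> g \<in> L2 M \<Longrightarrow> minner M f g $ a $ b = hinner M (\<lambda>x. munit b a ** f x) g"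
  by (simp add: hinner_def minner_mult_left mtrace_munit)

lemma Re_hinner_polar:
  assumes f: "f \<in> L2 M" and g: "g \<in> L2 M"
  shows "Re (hinner M f g) = ((l2norm M (\<lambda>x. f x + g x))\<^sup>2 - (l2norm M f)\<^sup>2 - (l2norm M g)\<^sup>2) / 2"
proof -
  have fg: "(\<lambda>x. f x + g x) \<in> L2 M" using f g by (rule L2_add)
  have sq: "(l2norm M h)\<^sup>2 = Re (hinner M h h)" if "h \<in> L2 M" for h
    using that by (simp add: l2norm_sq hinner_self)
  have "hinner M (\<lambda>x. f x + g x) (\<lambda>x. f x + g x) = hinner M f f + hinner M f g + (hinner M g f + hinner M g g)"
    using f g fg by (simp add: hinner_add_left hinner_add_right)
  then have "Re (hinner M (\<lambda>x. f x + g x) (\<lambda>x. f x + g x)) = Re (hinner M f f) + 2 * Re (hinner M f g) + Re (hinner M g g)"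
    using f g by (simp add: hinner_swap[of f M g])
  then show ?thesis using sq[OF fg] sq[OF f] sq[OF g] by simp
qed

lemma Im_hinner:
  assumes f: "f \<in> L2 M" and g: "g \<in> L2 M"
  shows "Im (hinner M f g) = Re (hinner M f (\<lambda>x. mscale \<i> (g x)))"
  using f g by (simp add: hinner_mscale_right)


abbreviation CN :: "nat measure" where "CN \<equiv> count_space UNIV"

lemma aeq_CN: "aeq CN f g \<longleftrightarrow> f = g"
  by (simp add: aeq_def AE_count_space fun_eq_iff)

typedef (overloaded) ('s::finite) ell2 = "L2 CN :: (nat \<Rightarrow> complex^'s^'s) set"
  morphisms seq Ell using L2_zero by blast

setup_lifting type_definition_ell2

lemma seq_L2[simp]: "seq x \<in> L2 CN" using seq by blast

lemma scaleR_mscale: "r *\<^sub>R (A :: complex^'r^'s) = mscale (of_real r) A"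
proof -
  have e: "r *\<^sub>R (z::complex) = of_real r * z" for z by (rule scaleR_conv_of_real)
  show ?thesis unfolding mscale_def vec_eq_iff by (simp add: e)
qed

instantiation ell2 :: (finite) real_inner
begin
lift_definition zero_ell2 :: "'a ell2" is "\<lambda>k. 0" by (rule L2_zero)
lift_definition plus_ell2 :: "'a ell2 \<Rightarrow> 'a ell2 \<Rightarrow> 'a ell2" is "\<lambda>f g k. f k + g k" by (rule L2_add)
lift_definition minus_ell2 :: "'a ell2 \<Rightarrow> 'a ell2 \<Rightarrow> 'a ell2" is "\<lambda>f g k. f k - g k" by (rule L2_diff)
lift_definition uminus_ell2 :: "'a ell2 \<Rightarrow> 'a ell2" is "\<lambda>f k. - f k"
  using L2_diff[OF L2_zero] by fastforce
lift_definition scaleR_ell2 :: "real \<Rightarrow> 'a ell2 \<Rightarrow> 'a ell2" is "\<lambda>r f k. r *\<^sub>R f k"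
  unfolding scaleR_mscale by (rule L2_mscale)
lift_definition norm_ell2 :: "'a ell2 \<Rightarrow> real" is "l2norm CN" .
lift_definition inner_ell2 :: "'a ell2 \<Rightarrow> 'a ell2 \<Rightarrow> real" is "\<lambda>f g. Re (hinner CN f g)" .
definition dist_ell2 :: "'a ell2 \<Rightarrow> 'a ell2 \<Rightarrow> real" where "dist_ell2 a b = norm (a - b)"
definition sgn_ell2 :: "'a ell2 \<Rightarrow> 'a ell2" where "sgn_ell2 x = scaleR (inverse (norm x)) x"
definition uniformity_ell2 :: "('a ell2 \<times> 'a ell2) filter" where
  "uniformity_ell2 = (INF e\<in>{0 <..}. principal {(x, y). dist x y < e})"
definition open_ell2 :: "'a ell2 set \<Rightarrow> bool"
  where "open_ell2 S = (\<forall>x\<in>S. \<forall>\<^sub>F (x', y) in uniformity. x' = x \<longrightarrow> y \<in> S)"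
instance
proof
  fix x y z :: "'a ell2" and r s :: real
  show "x + y + z = x + (y + z)" by transfer (simp add: add.assoc)
  show "x + y = y + x" by transfer (simp add: add.commute)
  show "0 + x = x" by transfer simp
  show "- x + x = 0" by transfer simp
  show "x - y = x + - y" by transfer simp
  show "r *\<^sub>R (x + y) = r *\<^sub>R x + r *\<^sub>R y" by transfer (simp add: scaleR_add_right)
  show "(r + s) *\<^sub>R x = r *\<^sub>R x + s *\<^sub>R x" by transfer (simp add: scaleR_add_left)
  show "r *\<^sub>R s *\<^sub>R x = (r * s) *\<^sub>R x" by transfer simp
  show "1 *\<^sub>R x = x" by transfer simp
  show "dist x y = norm (x - y)" by (simp add: dist_ell2_def)
  show "sgn x = inverse (norm x) *\<^sub>R x" by (simp add: sgn_ell2_def)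
  show "(uniformity :: ('a ell2 \<times> 'a ell2) filter) = (INF e\<in>{0 <..}. principal {(x, y). dist x y < e})"
    by (simp add: uniformity_ell2_def)
  show "open U = (\<forall>x\<in>U. \<forall>\<^sub>F (x', y) in uniformity. x' = x \<longrightarrow> y \<in> U)" for U :: "'a ell2 set"
    by (simp add: open_ell2_def)
  show "inner x y = inner y x"
  proof transfer
    fix f g :: "nat \<Rightarrow> complex^'a^'a" assume f: "f \<in> L2 CN" and g: "g \<in> L2 CN"
    show "Re (hinner CN f g) = Re (hinner CN g f)" using hinner_swap[OF f g] by simp
  qed
  show "inner (x + y) z = inner x z + inner y z"
    by transfer (simp add: hinner_add_left)
  show "inner (r *\<^sub>R x) y = r * inner x y"
    by transfer (simp add: scaleR_mscale hinner_mscale_left)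
  show "0 \<le> inner x x"
    by transfer (simp add: hinner_self integral_nonneg_AE)
  show "(inner x x = 0) = (x = 0)"
  proof transfer
    fix f :: "nat \<Rightarrow> complex^'a^'a" assume f: "f \<in> L2 CN"
    have "Re (hinner CN f f) = 0 \<longleftrightarrow> l2norm CN (\<lambda>x. f x - 0) = 0"
      using f by (simp add: l2norm_def)
    also have "\<dots> \<longleftrightarrow> aeq CN f (\<lambda>k. 0)" using aeq_iff_l2norm[OF f L2_zero] by simp
    also have "\<dots> \<longleftrightarrow> f = (\<lambda>k. 0)" by (simp add: aeq_CN)
    finally show "(Re (hinner CN f f) = 0) = (f = (\<lambda>k. 0))" .
  qed
  show "norm x = sqrt (inner x x)"
    by transfer (simp add: l2norm_def)
qed
end

lemma norm_ell2_sq: "(norm x)\<^sup>2 = (LINT k|CN. (norm (seq x k))\<^sup>2)"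
  by transfer (simp add: l2norm_sq)

lemma seq_diff: "seq (x - y) = (\<lambda>k. seq x k - seq y k)" by transfer simp
lemma seq_add: "seq (x + y) = (\<lambda>k. seq x k + seq y k)" by transfer simp

instance ell2 :: (finite) complete_space
proof
  fix X :: "nat \<Rightarrow> 'a ell2" assume "Cauchy X"
  define F where "F n = seq (X n)" for n
  have sF: "sqi CN (F n)" for n unfolding F_def using seq_L2 L2_sqi by blast
  have dist_sq: "(dist (X i) (X j))\<^sup>2 = (LINT k|CN. (norm (F i k - F j k))\<^sup>2)" for i j
    unfolding dist_norm norm_ell2_sq F_def seq_diff ..
  have C: "\<exists>N. \<forall>i\<ge>N. \<forall>j\<ge>N. (LINT k|CN. (norm (F i k - F j k))\<^sup>2) < e" if e: "e > 0" for e
  proof -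
    obtain N where N: "\<And>i j. i \<ge> N \<Longrightarrow> j \<ge> N \<Longrightarrow> dist (X i) (X j) < sqrt e"
      using \<open>Cauchy X\<close> e unfolding Cauchy_def by (meson real_sqrt_gt_zero)
    have "(dist (X i) (X j))\<^sup>2 < e" if "i \<ge> N" "j \<ge> N" for i j
    proof -
      have "dist (X i) (X j) < sqrt e" using N that by blast
      then have "(dist (X i) (X j))\<^sup>2 < (sqrt e)\<^sup>2" by (intro power_strict_mono) auto
      then show ?thesis using e by simp
    qed
    then show ?thesis unfolding dist_sq by blast
  qed
  obtain f where sf: "sqi CN f" and lim: "(\<lambda>n. LINT k|CN. (norm (F n k - f k))\<^sup>2) \<longlonglongrightarrow> 0"
    using sqi_complete[OF sF C] by blast
  have fL: "f \<in> L2 CN" using sf L2_sqi by blast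
  have "dist (X n) (Ell f) = sqrt (LINT k|CN. (norm (F n k - f k))\<^sup>2)" for n
  proof -
    have "(dist (X n) (Ell f))\<^sup>2 = (LINT k|CN. (norm (F n k - f k))\<^sup>2)"
      unfolding dist_norm norm_ell2_sq seq_diff F_def using Ell_inverse[OF fL] by simp
    then show ?thesis by (metis real_sqrt_unique zero_le_dist)
  qed
  then have "(\<lambda>n. dist (X n) (Ell f)) \<longlonglongrightarrow> 0"
    using tendsto_real_sqrt[OF lim] by simp
  then have "X \<longlonglongrightarrow> Ell f" by (rule tendsto_dist_iff[THEN iffD2])
  then show "convergent X" unfolding convergent_def by blast
qed


lemma hinner_diff_right: "f \<in> L2 M \<Longrightarrow> g \<in> L2 M \<Longrightarrow> h \<in> L2 M \<Longrightarrow>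
    hinner M h (\<lambda>x. f x - g x) = hinner M h f - hinner M h g"
  using hinner_swap[of "\<lambda>x. f x - g x" M h] hinner_swap[of f M h] hinner_swap[of g M h]
    hinner_diff_left[of f M g h] L2_diff[of f M g] by simp

lemma norm_le_sum_vec: "norm (x::'a::real_normed_vector^'n) \<le> (\<Sum>i\<in>UNIV. norm (x$i))"
  unfolding norm_vec_def using L2_set_le_sum_abs[of "\<lambda>i. norm (x$i)" UNIV] by simp

lemma norm_mat_mult_le:
  "norm ((A::complex^'m^'n) ** (B::complex^'p^'m)) \<le> (\<Sum>i\<in>UNIV. \<Sum>k\<in>(UNIV::'p set). \<Sum>j\<in>UNIV. cmod (A$i$j)) * norm B"
proof -
  have bj: "cmod (B $ j $ k) \<le> norm B" for j k
  proof -
    have "cmod (B $ j $ k) \<le> norm (B $ j)" by (rule Finite_Cartesian_Product.norm_nth_le)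
    also have "\<dots> \<le> norm B" by (rule Finite_Cartesian_Product.norm_nth_le)
    finally show ?thesis .
  qed
  have pt: "cmod ((A ** B) $ i $ k) \<le> (\<Sum>j\<in>UNIV. cmod (A$i$j) * norm B)" for i k
  proof -
    have "cmod ((A ** B) $ i $ k) = cmod (\<Sum>j\<in>UNIV. A$i$j * B$j$k)" by (simp add: matrix_matrix_mult_def)
    also have "\<dots> \<le> (\<Sum>j\<in>UNIV. cmod (A$i$j * B$j$k))" by (rule norm_sum)
    also have "\<dots> \<le> (\<Sum>j\<in>UNIV. cmod (A$i$j) * norm B)"
      by (rule sum_mono) (simp add: norm_mult mult_left_mono bj)
    finally show ?thesis .
  qed
  have "norm (A ** B) \<le> (\<Sum>i\<in>UNIV. norm ((A ** B) $ i))" by (rule norm_le_sum_vec)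
  also have "\<dots> \<le> (\<Sum>i\<in>UNIV. \<Sum>k\<in>UNIV. cmod ((A ** B) $ i $ k))"
    by (rule sum_mono) (rule norm_le_sum_vec)
  also have "\<dots> \<le> (\<Sum>i\<in>UNIV. \<Sum>k\<in>(UNIV::'p set). \<Sum>j\<in>UNIV. cmod (A$i$j) * norm B)"
    by (rule sum_mono, rule sum_mono, rule pt)
  also have "\<dots> = (\<Sum>i\<in>UNIV. \<Sum>k\<in>(UNIV::'p set). \<Sum>j\<in>UNIV. cmod (A$i$j)) * norm B"
    by (simp only: sum_distrib_right)
  finally show ?thesis .
qed

lemma mat_delta_mult: "(if k = j then mat 1 else 0) ** X = (if k = j then X else (0::complex^'a^'b))"
  by simp

lemma mult_mat_delta: "X ** (if k = j then mat 1 else 0) = (if k = j then X else (0::complex^'a^'b))"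
  by simp

definition mact :: "complex^'s^'s \<Rightarrow> 's::finite ell2 \<Rightarrow> 's ell2" where
  "mact A x = Ell (\<lambda>k. A ** seq x k)"

lemma seq_mact: "seq (mact A x) = (\<lambda>k. A ** seq x k)"
  unfolding mact_def by (rule Ell_inverse) (simp add: L2_mult)

lemma seq_inj: "seq x = seq y \<Longrightarrow> x = y" by (simp add: seq_inject)

lemma seq_scaleR: "seq (r *\<^sub>R x) = (\<lambda>k. r *\<^sub>R seq x k)" by transfer simp
lemma seq_zero: "seq 0 = (\<lambda>k. 0)" by transfer simp

lemma mact_add: "mact A (x + y) = mact A x + mact A y"
  by (rule seq_inj) (simp add: seq_mact seq_add matrix_add_ldistrib)
lemma mact_scaleR: "mact A (r *\<^sub>R x) = r *\<^sub>R mact A x"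
  by (rule seq_inj) (simp add: seq_mact seq_scaleR matrix_scalar_ac scalar_matrix_assoc)
lemma mact_one: "mact (mat 1) x = x"
  by (rule seq_inj) (simp add: seq_mact)
lemma mact_zero: "mact (mat 0) x = 0"
  by (rule seq_inj) (simp add: seq_mact seq_zero)
lemma mact_mact: "mact A (mact B x) = mact (A ** B) x"
  by (rule seq_inj) (simp add: seq_mact matrix_mul_assoc)
lemma mact_of_real: "mact (mat (of_real r)) x = r *\<^sub>R x"
  by (rule seq_inj) (simp add: seq_mact seq_scaleR scaleR_mscale mscale_mat)

lemma norm_mact: "norm (mact (A::complex^'s^'s) x) \<le> (\<Sum>i\<in>UNIV. \<Sum>k\<in>(UNIV::'s::finite set). \<Sum>j\<in>UNIV. cmod (A$i$j)) * norm x"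
proof -
  define K where "K = (\<Sum>i\<in>UNIV. \<Sum>k\<in>(UNIV::'s set). \<Sum>j\<in>UNIV. cmod (A$i$j))"
  have K0: "K \<ge> 0" unfolding K_def by (simp add: sum_nonneg)
  have L: "seq x \<in> L2 CN" by simp
  have i1: "integrable CN (\<lambda>k. (norm (seq x k))\<^sup>2)" using L by (simp add: L2_sqi sqi_def)
  have i2: "integrable CN (\<lambda>k. (norm (A ** seq x k))\<^sup>2)" using L2_mult[OF L, of A] by (simp add: L2_sqi sqi_def)
  have pw: "(norm (A ** seq x k))\<^sup>2 \<le> K\<^sup>2 * (norm (seq x k))\<^sup>2" for k
  proof -
    have "norm (A ** seq x k) \<le> K * norm (seq x k)" unfolding K_def by (rule norm_mat_mult_le)
    then have "(norm (A ** seq x k))\<^sup>2 \<le> (K * norm (seq x k))\<^sup>2" by (rule power_mono) simp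
    then show ?thesis by (simp add: power_mult_distrib)
  qed
  have "(norm (mact A x))\<^sup>2 = (LINT k|CN. (norm (A ** seq x k))\<^sup>2)" by (simp add: norm_ell2_sq seq_mact)
  also have "\<dots> \<le> (LINT k|CN. K\<^sup>2 * (norm (seq x k))\<^sup>2)"
    by (rule integral_mono) (use i1 i2 pw in auto)
  also have "\<dots> = K\<^sup>2 * (norm x)\<^sup>2" by (simp add: norm_ell2_sq)
  also have "\<dots> = (K * norm x)\<^sup>2" by (simp add: power_mult_distrib)
  finally have "(norm (mact A x))\<^sup>2 \<le> (K * norm x)\<^sup>2" .
  then have "norm (mact A x) \<le> K * norm x" using K0 by (simp add: power2_le_iff_abs_le)
  then show ?thesis by (simp add: K_def)
qed

lemma bl_mact: "bounded_linear (mact (A::complex^'s^'s) :: 's::finite ell2 \<Rightarrow> 's ell2)"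
proof (rule bounded_linear_intro[where K="(\<Sum>i\<in>UNIV. \<Sum>k\<in>(UNIV::'s set). \<Sum>j\<in>UNIV. cmod (A$i$j))"])
  fix x y :: "'s ell2" and r :: real
  show "mact A (x + y) = mact A x + mact A y" by (rule mact_add)
  show "mact A (r *\<^sub>R x) = r *\<^sub>R mact A x" by (rule mact_scaleR)
  show "norm (mact A x) \<le> norm x * (\<Sum>i\<in>UNIV. \<Sum>k\<in>(UNIV::'s set). \<Sum>j\<in>UNIV. cmod (A$i$j))"
    using norm_mact[of A x] by (simp only: mult.commute)
qed

definition MA :: "complex^'s^'s \<Rightarrow> 's::finite ell2 bop" where "MA A = mkop (mact A)"

lemma MA_app[simp]: "MA A $$ x = mact A x"
  unfolding MA_def by (rule app_mkop[OF bl_mact])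

lemma inner_polar': "inner x y = ((norm (x + y))\<^sup>2 - (norm x)\<^sup>2 - (norm (y::'a::real_inner))\<^sup>2) / 2"
  by (simp add: power2_norm_eq_inner inner_add_left inner_add_right inner_commute)

locale onbc =
  fixes M :: "'g measure" and E :: "nat \<Rightarrow> 'g \<Rightarrow> complex^'r::finite^'s::finite"
  assumes onb: "mat_onb M E"
begin

lemma EL: "E k \<in> L2 M" using onb by (simp add: mat_onb_def)
lemma orth: "minner M (E k) (E j) = (if k = j then mat 1 else 0)" using onb by (simp add: mat_onb_def)
lemma expn: "f \<in> L2 M \<Longrightarrow> (\<lambda>n. l2norm M (\<lambda>x. f x - (\<Sum>k<n. minner M f (E k) ** E k x))) \<longlonglongrightarrow> 0"
  using onb by (simp add: mat_onb_def)

definition coef where "coef f k = minner M f (E k)"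
definition PP where "PP n c = (\<lambda>x. \<Sum>k<n. c k ** E k x)"

lemma PP_L2: "PP n c \<in> L2 M"
  unfolding PP_def by (intro L2_sum L2_mult EL) auto

lemma minner_E_PP: "k < n \<Longrightarrow> minner M (E k) (PP n c) = ctrans (c k)"
proof -
  assume k: "k < n"
  have "minner M (E k) (PP n c) = (\<Sum>j<n. minner M (E k) (\<lambda>x. c j ** E j x))"
    unfolding PP_def by (rule minner_sum_right) (auto intro: L2_mult EL)
  also have "\<dots> = (\<Sum>j<n. (if k = j then ctrans (c j) else 0))"
    by (rule sum.cong) (auto simp: minner_mult_right EL orth)
  also have "\<dots> = ctrans (c k)" using k by simp
  finally show ?thesis .
qed

lemma coef_PP: "coef (PP n c) j = (if j < n then c j else 0)"
proof -
  have "coef (PP n c) j = (\<Sum>k<n. minner M (\<lambda>x. c k ** E k x) (E j))"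
    unfolding coef_def PP_def by (rule minner_sum_left) (auto intro: L2_mult EL)
  also have "\<dots> = (\<Sum>k<n. (if k = j then c k else 0))"
    by (rule sum.cong) (auto simp: minner_mult_left EL orth)
  also have "\<dots> = (if j < n then c j else 0)" by simp
  finally show ?thesis .
qed

lemma hinner_PP_left: "g \<in> L2 M \<Longrightarrow> hinner M (PP n c) g = (\<Sum>k<n. mtrace (c k ** minner M (E k) g))"
proof -
  assume g: "g \<in> L2 M"
  have "minner M (PP n c) g = (\<Sum>k<n. minner M (\<lambda>x. c k ** E k x) g)"
    unfolding PP_def by (rule minner_sum_left) (auto intro: L2_mult EL g)
  also have "\<dots> = (\<Sum>k<n. c k ** minner M (E k) g)"
    by (rule sum.cong) (auto simp: minner_mult_left EL g)
  finally show ?thesis by (simp add: hinner_def mtrace_sum)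
qed

lemma pars_step:
  assumes f: "f \<in> L2 M"
  shows "(l2norm M (\<lambda>x. f x - PP n (coef f) x))\<^sup>2 = (l2norm M f)\<^sup>2 - (\<Sum>k<n. (norm (coef f k))\<^sup>2)"
proof -
  let ?P = "PP n (coef f)"
  have P: "?P \<in> L2 M" by (rule PP_L2)
  have Pf: "hinner M ?P f = of_real (\<Sum>k<n. (norm (coef f k))\<^sup>2)"
  proof -
    have "hinner M ?P f = (\<Sum>k<n. mtrace (coef f k ** ctrans (coef f k)))"
      unfolding hinner_PP_left[OF f] using minner_swap[OF f EL] by (simp add: coef_def)
    then show ?thesis by (simp add: mtrace_self)
  qed
  have fP: "hinner M f ?P = of_real (\<Sum>k<n. (norm (coef f k))\<^sup>2)"
    using hinner_swap[OF P f] Pf by simp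
  have PP': "hinner M ?P ?P = of_real (\<Sum>k<n. (norm (coef f k))\<^sup>2)"
  proof -
    have "hinner M ?P ?P = (\<Sum>k<n. mtrace (coef f k ** ctrans (coef f k)))"
      unfolding hinner_PP_left[OF P] by (rule sum.cong) (auto simp: minner_E_PP)
    then show ?thesis by (simp add: mtrace_self)
  qed
  have d: "(\<lambda>x. f x - ?P x) \<in> L2 M" using f P by (rule L2_diff)
  have "hinner M (\<lambda>x. f x - ?P x) (\<lambda>x. f x - ?P x)
      = (hinner M f f - hinner M f ?P) - (hinner M ?P f - hinner M ?P ?P)"
    using f P d by (simp add: hinner_diff_left hinner_diff_right)
  also have "\<dots> = hinner M f f - of_real (\<Sum>k<n. (norm (coef f k))\<^sup>2)"
    using Pf fP PP' by simp
  finally have "Re (hinner M (\<lambda>x. f x - ?P x) (\<lambda>x. f x - ?P x)) = Re (hinner M f f) - (\<Sum>k<n. (norm (coef f k))\<^sup>2)"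
    by simp
  then show ?thesis using d f by (simp add: l2norm_sq hinner_self)
qed

lemma parseval: "f \<in> L2 M \<Longrightarrow> (\<lambda>k. (norm (coef f k))\<^sup>2) sums (l2norm M f)\<^sup>2"
proof -
  assume f: "f \<in> L2 M"
  have "(\<lambda>n. l2norm M (\<lambda>x. f x - PP n (coef f) x)) \<longlonglongrightarrow> 0"
    using expn[OF f] by (simp add: PP_def coef_def)
  then have "(\<lambda>n. (l2norm M (\<lambda>x. f x - PP n (coef f) x))\<^sup>2) \<longlonglongrightarrow> 0"
    using tendsto_power[of _ 0 sequentially 2] by fastforce
  then have "(\<lambda>n. (l2norm M f)\<^sup>2 - (\<Sum>k<n. (norm (coef f k))\<^sup>2)) \<longlonglongrightarrow> 0"
    by (simp add: pars_step[OF f])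
  then have "(\<lambda>n. (l2norm M f)\<^sup>2 - ((l2norm M f)\<^sup>2 - (\<Sum>k<n. (norm (coef f k))\<^sup>2))) \<longlonglongrightarrow> (l2norm M f)\<^sup>2 - 0"
    by (intro tendsto_diff tendsto_const)
  then show ?thesis unfolding sums_def by simp
qed

end


lemma entry_le_norm: "cmod ((A::complex^'r^'s) $ i $ j) \<le> norm A"
proof -
  have "cmod (A $ i $ j) \<le> norm (A $ i)" by (rule Finite_Cartesian_Product.norm_nth_le)
  also have "\<dots> \<le> norm A" by (rule Finite_Cartesian_Product.norm_nth_le)
  finally show ?thesis .
qed

lemma L2_CN_iff: "(c :: nat \<Rightarrow> complex^'r^'s) \<in> L2 CN \<longleftrightarrow> (\<forall>i j. summable (\<lambda>k. (cmod (c k $ i $ j))\<^sup>2))"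
  unfolding L2_def by (simp add: integrable_count_space_nat_iff)

lemma L2_CN_I: "summable (\<lambda>k. (norm ((c :: nat \<Rightarrow> complex^'r^'s) k))\<^sup>2) \<Longrightarrow> c \<in> L2 CN"
  unfolding L2_CN_iff
proof (intro allI)
  fix i j assume s: "summable (\<lambda>k. (norm (c k))\<^sup>2)"
  show "summable (\<lambda>k. (cmod (c k $ i $ j))\<^sup>2)"
    by (rule summable_comparison_test[OF _ s]) (auto intro!: exI[of _ 0] power_mono entry_le_norm)
qed

lemma summable_CN: "c \<in> L2 CN \<Longrightarrow> summable (\<lambda>k. (norm ((c :: nat \<Rightarrow> complex^'r^'s) k))\<^sup>2)"
  unfolding L2_sqi sqi_def by (simp add: integrable_count_space_nat_iff)

lemma norm_sq_seq: "(norm x)\<^sup>2 = (\<Sum>k. (norm (seq x k))\<^sup>2)"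
proof -
  have "integrable CN (\<lambda>k. (norm (seq x k))\<^sup>2)" using seq_L2[of x] by (simp add: L2_sqi sqi_def)
  then show ?thesis by (simp add: norm_ell2_sq integral_count_space_nat)
qed

context onbc
begin

lemma coef_L2: "f \<in> L2 M \<Longrightarrow> coef f \<in> L2 CN"
  by (rule L2_CN_I) (rule sums_summable[OF parseval])

definition Phi :: "('g \<Rightarrow> complex^'r^'s) \<Rightarrow> 's ell2" where "Phi f = Ell (coef f)"

lemma seq_Phi: "f \<in> L2 M \<Longrightarrow> seq (Phi f) = coef f"
  unfolding Phi_def by (rule Ell_inverse) (rule coef_L2)

lemma l2norm_nonneg: "f \<in> L2 M \<Longrightarrow> 0 \<le> l2norm M f"
  by (simp add: l2norm_eq integral_nonneg_AE)

lemma norm_Phi: "f \<in> L2 M \<Longrightarrow> norm (Phi f) = l2norm M f"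
proof -
  assume f: "f \<in> L2 M"
  have "(norm (Phi f))\<^sup>2 = (\<Sum>k. (norm (coef f k))\<^sup>2)" by (simp add: norm_sq_seq seq_Phi[OF f])
  also have "\<dots> = (l2norm M f)\<^sup>2" using parseval[OF f] by (simp add: sums_iff)
  finally show ?thesis using l2norm_nonneg[OF f] by (simp add: power2_eq_iff_nonneg)
qed

lemma Phi_add: "f \<in> L2 M \<Longrightarrow> g \<in> L2 M \<Longrightarrow> Phi (\<lambda>x. f x + g x) = Phi f + Phi g"
  by (rule seq_inj) (simp add: seq_add seq_Phi L2_add coef_def minner_add_left EL fun_eq_iff)

lemma Phi_diff: "f \<in> L2 M \<Longrightarrow> g \<in> L2 M \<Longrightarrow> Phi (\<lambda>x. f x - g x) = Phi f - Phi g"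
  by (rule seq_inj) (simp add: seq_diff seq_Phi L2_diff coef_def minner_diff_left EL fun_eq_iff)

lemma Phi_mult: "f \<in> L2 M \<Longrightarrow> Phi (\<lambda>x. A ** f x) = mact A (Phi f)"
  by (rule seq_inj) (simp add: seq_mact seq_Phi L2_mult coef_def minner_mult_left EL fun_eq_iff)

lemma Phi_mscale: "f \<in> L2 M \<Longrightarrow> Phi (\<lambda>x. mscale c (f x)) = mact (mat c) (Phi f)"
  by (simp add: mscale_mat Phi_mult)

lemma Phi_aeq: "f \<in> L2 M \<Longrightarrow> g \<in> L2 M \<Longrightarrow> aeq M f g \<Longrightarrow> Phi f = Phi g"
  unfolding Phi_def coef_def by (simp add: minner_aeq_left EL)

lemma aeq_Phi: "f \<in> L2 M \<Longrightarrow> g \<in> L2 M \<Longrightarrow> Phi f = Phi g \<Longrightarrow> aeq M f g"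
proof -
  assume f: "f \<in> L2 M" and g: "g \<in> L2 M" and e: "Phi f = Phi g"
  have "l2norm M (\<lambda>x. f x - g x) = norm (Phi (\<lambda>x. f x - g x))" using L2_diff[OF f g] by (simp add: norm_Phi)
  also have "\<dots> = 0" using e f g by (simp add: Phi_diff)
  finally show ?thesis using aeq_iff_l2norm[OF f g] by simp
qed

lemma inner_Phi: "f \<in> L2 M \<Longrightarrow> g \<in> L2 M \<Longrightarrow> Re (hinner M f g) = inner (Phi f) (Phi g)"
  by (simp add: Re_hinner_polar inner_polar' Phi_add[symmetric] norm_Phi L2_add)

lemma hinner_Phi: "f \<in> L2 M \<Longrightarrow> g \<in> L2 M \<Longrightarrow>
    hinner M f g = Complex (inner (Phi f) (Phi g)) (inner (Phi f) (mact (mat \<i>) (Phi g)))"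
proof -
  assume f: "f \<in> L2 M" and g: "g \<in> L2 M"
  have "Im (hinner M f g) = inner (Phi f) (mact (mat \<i>) (Phi g))"
    using f g by (simp add: Im_hinner inner_Phi L2_mscale Phi_mscale)
  then show ?thesis using f g by (simp add: complex_eq_iff inner_Phi)
qed

lemma tail_tendsto:
  fixes a :: "nat \<Rightarrow> real"
  assumes s: "summable a"
  shows "(\<lambda>n. \<Sum>k. if k < n then 0 else a k) \<longlonglongrightarrow> 0"
proof -
  have e: "(\<Sum>k. if k < n then 0 else a k) = suminf a - (\<Sum>k<n. a k)" for n
  proof -
    have f: "summable (\<lambda>k. if k < n then a k else 0)"
      by (rule summable_finite[of "{..<n}"]) auto
    have "(\<Sum>k. if k < n then 0 else a k) = (\<Sum>k. a k - (if k < n then a k else 0))"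
      by (rule suminf_cong) auto
    also have "\<dots> = suminf a - (\<Sum>k. if k < n then a k else 0)" using suminf_diff[OF s f] by simp
    also have "(\<Sum>k. if k < n then a k else 0) = (\<Sum>k<n. (if k < n then a k else 0))"
      by (rule suminf_finite) auto
    finally show ?thesis by simp
  qed
  have "(\<lambda>n. suminf a - (\<Sum>k<n. a k)) \<longlonglongrightarrow> suminf a - suminf a"
    by (intro tendsto_diff tendsto_const summable_LIMSEQ[OF s])
  then show ?thesis unfolding e by simp
qed

lemma Phi_PP: "Phi (PP n c) = Ell (\<lambda>k. if k < n then c k else 0)"
  unfolding Phi_def by (simp add: coef_PP[abs_def])

lemma Phi_surj: "\<exists>f\<in>L2 M. Phi f = h"
proof -
  define c where "c = seq h"
  have cL: "c \<in> L2 CN" by (simp add: c_def)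
  have hc: "seq h = c" by (simp add: c_def)
  have sc: "summable (\<lambda>k. (norm (c k))\<^sup>2)" by (rule summable_CN[OF cL])
  define F where "F n = PP n c" for n
  have FL: "F n \<in> L2 M" for n unfolding F_def by (rule PP_L2)
  have tL: "(\<lambda>k. if k < n then c k else 0) \<in> L2 CN" for n
    by (rule L2_CN_I, rule summable_comparison_test[OF _ sc]) auto
  have dL: "(\<lambda>k. c k - (if k < n then c k else 0)) \<in> L2 CN" for n
    by (rule L2_diff[OF cL tL])
  have lim1: "(\<lambda>n. Phi (F n)) \<longlonglongrightarrow> h"
  proof -
    have "(norm (Phi (F n) - h))\<^sup>2 = (\<Sum>k. if k < n then 0 else (norm (c k))\<^sup>2)" for n
    proof -
      have "(norm (Phi (F n) - h))\<^sup>2 = (norm (h - Phi (F n)))\<^sup>2" by (simp add: norm_minus_commute)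
      also have "\<dots> = (\<Sum>k. (norm (c k - (if k < n then c k else 0)))\<^sup>2)"
        by (simp add: norm_sq_seq seq_diff F_def Phi_PP Ell_inverse[OF tL] hc)
      also have "\<dots> = (\<Sum>k. if k < n then 0 else (norm (c k))\<^sup>2)" by (rule suminf_cong) auto
      finally show ?thesis .
    qed
    then have "(\<lambda>n. (norm (Phi (F n) - h))\<^sup>2) \<longlonglongrightarrow> 0" using tail_tendsto[OF sc] by simp
    then have "(\<lambda>n. sqrt ((norm (Phi (F n) - h))\<^sup>2)) \<longlonglongrightarrow> sqrt 0" by (rule tendsto_real_sqrt)
    then have "(\<lambda>n. norm (Phi (F n) - h)) \<longlonglongrightarrow> 0" by simp
    then show ?thesis by (simp add: tendsto_iff dist_norm)
  qed
  have Cau: "Cauchy (\<lambda>n. Phi (F n))" using lim1 by (rule LIMSEQ_imp_Cauchy)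
  have sF: "sqi M (F n)" for n using FL L2_sqi by blast
  have dist_eq: "(dist (Phi (F i)) (Phi (F j)))\<^sup>2 = (LINT x|M. (norm (F i x - F j x))\<^sup>2)" for i j
  proof -
    have "dist (Phi (F i)) (Phi (F j)) = l2norm M (\<lambda>x. F i x - F j x)"
      by (simp add: dist_norm Phi_diff[symmetric] FL norm_Phi L2_diff)
    then show ?thesis by (simp add: l2norm_sq L2_diff FL)
  qed
  have C: "\<exists>N. \<forall>i\<ge>N. \<forall>j\<ge>N. (LINT x|M. (norm (F i x - F j x))\<^sup>2) < e" if e: "e > 0" for e
  proof -
    obtain N where N: "\<And>i j. i \<ge> N \<Longrightarrow> j \<ge> N \<Longrightarrow> dist (Phi (F i)) (Phi (F j)) < sqrt e"
      using Cau e unfolding Cauchy_def by (meson real_sqrt_gt_zero)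
    have "(dist (Phi (F i)) (Phi (F j)))\<^sup>2 < e" if "i \<ge> N" "j \<ge> N" for i j
    proof -
      have "dist (Phi (F i)) (Phi (F j)) < sqrt e" using N that by blast
      then have "(dist (Phi (F i)) (Phi (F j)))\<^sup>2 < (sqrt e)\<^sup>2" by (intro power_strict_mono) auto
      then show ?thesis using e by simp
    qed
    then show ?thesis unfolding dist_eq by blast
  qed
  obtain f where sf: "sqi M f" and lim: "(\<lambda>n. LINT x|M. (norm (F n x - f x))\<^sup>2) \<longlonglongrightarrow> 0"
    using sqi_complete[OF sF C] by blast
  have fL: "f \<in> L2 M" using sf L2_sqi by blast
  have "norm (Phi (F n) - Phi f) = sqrt (LINT x|M. (norm (F n x - f x))\<^sup>2)" for n
    by (simp add: Phi_diff[symmetric] FL fL norm_Phi L2_diff l2norm_eq)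
  then have "(\<lambda>n. norm (Phi (F n) - Phi f)) \<longlonglongrightarrow> 0"
    using tendsto_real_sqrt[OF lim] by simp
  then have lim2: "(\<lambda>n. Phi (F n)) \<longlonglongrightarrow> Phi f" by (simp add: tendsto_iff dist_norm)
  have "Phi f = h" using LIMSEQ_unique[OF lim2 lim1] .
  then show ?thesis using fL by blast
qed

definition Psi :: "'s ell2 \<Rightarrow> ('g \<Rightarrow> complex^'r^'s)" where "Psi h = (SOME f. f \<in> L2 M \<and> Phi f = h)"

lemma Psi: "Psi h \<in> L2 M \<and> Phi (Psi h) = h"
  unfolding Psi_def using Phi_surj[of h] by (metis (mono_tags, lifting) someI_ex)

lemma Psi_L2: "Psi h \<in> L2 M" using Psi by blast
lemma Phi_Psi: "Phi (Psi h) = h" using Psi by blast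
lemma Psi_Phi: "f \<in> L2 M \<Longrightarrow> aeq M (Psi (Phi f)) f"
  by (rule aeq_Phi) (auto simp: Psi_L2 Phi_Psi)

end


instance ell2 :: (finite) banach ..

context onbc
begin

definition opH :: "(('g \<Rightarrow> complex^'r^'s) \<Rightarrow> ('g \<Rightarrow> complex^'r^'s)) \<Rightarrow> 's ell2 bop" where
  "opH U = mkop (\<lambda>h. Phi (U (Psi h)))"

lemma bop_D:
  assumes "bounded_op M U"
  shows "\<And>f. f \<in> L2 M \<Longrightarrow> U f \<in> L2 M"
    and "\<And>f g. f \<in> L2 M \<Longrightarrow> g \<in> L2 M \<Longrightarrow> aeq M f g \<Longrightarrow> aeq M (U f) (U g)"
    and "\<And>a b f g. f \<in> L2 M \<Longrightarrow> g \<in> L2 M \<Longrightarrow>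
          aeq M (U (\<lambda>x. mscale a (f x) + mscale b (g x))) (\<lambda>x. mscale a (U f x) + mscale b (U g x))"
    and "\<exists>C. \<forall>f\<in>L2 M. l2norm M (U f) \<le> C * l2norm M f"
  using assms unfolding bounded_op_def by blast+

lemma comb_L2: "f \<in> L2 M \<Longrightarrow> g \<in> L2 M \<Longrightarrow> (\<lambda>x. mscale a (f x) + mscale b (g x)) \<in> L2 M"
  by (intro L2_add L2_mscale)

lemma Phi_comb: "f \<in> L2 M \<Longrightarrow> g \<in> L2 M \<Longrightarrow>
    Phi (\<lambda>x. mscale a (f x) + mscale b (g x)) = mact (mat a) (Phi f) + mact (mat b) (Phi g)"
  by (simp add: Phi_add L2_mscale Phi_mscale)

lemma opH_comb:
  assumes U: "bounded_op M U"
  shows "Phi (U (Psi (mact (mat a) h1 + mact (mat b) h2))) = mact (mat a) (Phi (U (Psi h1))) + mact (mat b) (Phi (U (Psi h2)))"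
proof -
  note UD = bop_D[OF U]
  let ?c = "\<lambda>x. mscale a (Psi h1 x) + mscale b (Psi h2 x)"
  have cL: "?c \<in> L2 M" by (intro comb_L2 Psi_L2)
  have "aeq M (Psi (mact (mat a) h1 + mact (mat b) h2)) ?c"
    by (rule aeq_Phi) (auto simp: Psi_L2 cL Phi_Psi Phi_comb)
  then have "aeq M (U (Psi (mact (mat a) h1 + mact (mat b) h2))) (U ?c)"
    by (intro UD(2) Psi_L2 cL)
  then have "Phi (U (Psi (mact (mat a) h1 + mact (mat b) h2))) = Phi (U ?c)"
    by (intro Phi_aeq UD(1) Psi_L2 cL)
  also have "\<dots> = Phi (\<lambda>x. mscale a (U (Psi h1) x) + mscale b (U (Psi h2) x))"
    by (intro Phi_aeq UD(1) cL comb_L2 Psi_L2 UD(3))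
  also have "\<dots> = mact (mat a) (Phi (U (Psi h1))) + mact (mat b) (Phi (U (Psi h2)))"
    by (intro Phi_comb UD(1) Psi_L2)
  finally show ?thesis .
qed

lemma bl_opH:
  assumes U: "bounded_op M U"
  shows "bounded_linear (\<lambda>h. Phi (U (Psi h)))"
proof -
  note UD = bop_D[OF U]
  obtain C where C: "\<And>f. f \<in> L2 M \<Longrightarrow> l2norm M (U f) \<le> C * l2norm M f" using UD(4) by blast
  show ?thesis
  proof (rule bounded_linear_intro[where K=C])
    fix x y :: "'s ell2" and r :: real
    show "Phi (U (Psi (x + y))) = Phi (U (Psi x)) + Phi (U (Psi y))"
      using opH_comb[OF U, of 1 x 1 y] unfolding mact_one .
    show "Phi (U (Psi (r *\<^sub>R x))) = r *\<^sub>R Phi (U (Psi x))"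
      using opH_comb[OF U, of "of_real r" x 0 x] unfolding mact_of_real mact_zero add_0_right .
    show "norm (Phi (U (Psi x))) \<le> norm x * C"
    proof -
      have e1: "l2norm M (Psi x) = norm x" using norm_Phi[OF Psi_L2[of x]] Phi_Psi by simp
      have e2: "norm (Phi (U (Psi x))) = l2norm M (U (Psi x))" by (rule norm_Phi[OF UD(1)[OF Psi_L2]])
      show ?thesis using C[OF Psi_L2[of x]] unfolding e1 e2 by (simp add: mult.commute)
    qed
  qed
qed

lemma opH_app': "bounded_op M U \<Longrightarrow> opH U $$ h = Phi (U (Psi h))"
  unfolding opH_def by (rule app_mkop[OF bl_opH])

lemma opH_app: "bounded_op M U \<Longrightarrow> f \<in> L2 M \<Longrightarrow> opH U $$ Phi f = Phi (U f)"
proof -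
  assume U: "bounded_op M U" and f: "f \<in> L2 M"
  have "aeq M (Psi (Phi f)) f" by (rule Psi_Phi[OF f])
  then have a: "aeq M (U (Psi (Phi f))) (U f)" by (rule bop_D(2)[OF U Psi_L2 f])
  have "Phi (U (Psi (Phi f))) = Phi (U f)"
    by (rule Phi_aeq[OF bop_D(1)[OF U Psi_L2] bop_D(1)[OF U f] a])
  then show ?thesis by (simp only: opH_app'[OF U])
qed

lemma bop_eqI_Phi: "(\<And>f. f \<in> L2 M \<Longrightarrow> A $$ Phi f = B $$ Phi f) \<Longrightarrow> A = B"
  by (rule bop_eqI) (metis Phi_Psi Psi_L2)

lemma rep_bounded:
  assumes UL: "\<And>f. f \<in> L2 M \<Longrightarrow> U f \<in> L2 M"
    and rep: "\<And>f. f \<in> L2 M \<Longrightarrow> Phi (U f) = B $$ Phi f"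
    and cm: "\<And>c. B * MA (mat c) = MA (mat c) * B"
  shows "bounded_op M U"
  unfolding bounded_op_def
proof (intro conjI ballI allI impI)
  show "U f \<in> L2 M" if "f \<in> L2 M" for f using UL that .
  show "aeq M (U f) (U g)" if "f \<in> L2 M" "g \<in> L2 M" "aeq M f g" for f g
    by (rule aeq_Phi) (use that UL rep Phi_aeq in auto)
  show "aeq M (U (\<lambda>x. mscale a (f x) + mscale b (g x))) (\<lambda>x. mscale a (U f x) + mscale b (U g x))"
    if f: "f \<in> L2 M" and g: "g \<in> L2 M" for a b f g
  proof (rule aeq_Phi)
    show "U (\<lambda>x. mscale a (f x) + mscale b (g x)) \<in> L2 M" by (intro UL comb_L2 f g)
    show "(\<lambda>x. mscale a (U f x) + mscale b (U g x)) \<in> L2 M" by (intro comb_L2 UL f g)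
    have ca: "B $$ mact (mat c) x = mact (mat c) (B $$ x)" for c x
      using cm[of c] by (metis MA_app app_mult)
    show "Phi (U (\<lambda>x. mscale a (f x) + mscale b (g x))) = Phi (\<lambda>x. mscale a (U f x) + mscale b (U g x))"
      using f g by (simp add: rep comb_L2 Phi_comb UL ca)
  qed
  show "\<exists>C. \<forall>f\<in>L2 M. l2norm M (U f) \<le> C * l2norm M f"
  proof (intro exI ballI)
    fix f :: "'g \<Rightarrow> complex^'r^'s" assume f: "f \<in> L2 M"
    have "l2norm M (U f) = norm (B $$ Phi f)" using f by (simp add: norm_Phi[symmetric] UL rep)
    also have "\<dots> \<le> norm B * norm (Phi f)" by (rule norm_app)
    finally show "l2norm M (U f) \<le> norm B * l2norm M f" using f by (simp add: norm_Phi)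
  qed
qed

lemma rep_hinner:
  assumes UL: "\<And>f. f \<in> L2 M \<Longrightarrow> U f \<in> L2 M"
    and rep: "\<And>f. f \<in> L2 M \<Longrightarrow> Phi (U f) = B $$ Phi f"
    and cm: "B * MA (mat \<i>) = MA (mat \<i>) * B"
    and saB: "sa B"
    and f: "f \<in> L2 M" and g: "g \<in> L2 M"
  shows "hinner M (U f) g = hinner M f (U g)"
proof -
  have ca: "B $$ mact (mat \<i>) x = mact (mat \<i>) (B $$ x)" for x
    using cm by (metis MA_app app_mult)
  have s: "inner (B $$ x) y = inner x (B $$ y)" for x y using saB by (simp add: sa_def)
  show ?thesis using f g UL
    by (simp add: hinner_Phi rep s ca)
qed

lemma rep_minner:
  assumes UL: "\<And>f. f \<in> L2 M \<Longrightarrow> U f \<in> L2 M"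
    and rep: "\<And>f. f \<in> L2 M \<Longrightarrow> Phi (U f) = B $$ Phi f"
    and cm: "\<And>A. B * MA A = MA A * B"
    and saB: "sa B"
    and f: "f \<in> L2 M" and g: "g \<in> L2 M"
  shows "minner M (U f) g = minner M f (U g)"
proof -
  have ca: "B $$ mact A x = mact A (B $$ x)" for A x
    using cm[of A] by (metis MA_app app_mult)
  have "minner M (U f) g $ a $ b = minner M f (U g) $ a $ b" for a b
  proof -
    let ?m = "munit b a"
    have mf: "(\<lambda>x. ?m ** f x) \<in> L2 M" using f by (rule L2_mult)
    have "aeq M (\<lambda>x. ?m ** U f x) (U (\<lambda>x. ?m ** f x))"
      by (rule aeq_Phi) (use f mf UL in \<open>auto simp: L2_mult Phi_mult rep ca\<close>)
    then have "minner M (U f) g $ a $ b = hinner M (U (\<lambda>x. ?m ** f x)) g"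
      using f g UL mf by (simp add: minner_via_hinner hinner_aeq_left L2_mult)
    also have "\<dots> = hinner M (\<lambda>x. ?m ** f x) (U g)"
      by (rule rep_hinner[OF UL rep cm saB mf g])
    also have "\<dots> = minner M f (U g) $ a $ b" using f g UL by (simp add: minner_via_hinner)
    finally show ?thesis .
  qed
  then show ?thesis by (simp add: vec_eq_iff)
qed

end


context onbc
begin

lemma riesz_from:
  assumes UL: "\<And>f. f \<in> L2 M \<Longrightarrow> U f \<in> L2 M"
    and rep: "\<And>f. f \<in> L2 M \<Longrightarrow> Phi (U f) = B $$ Phi f"
    and cm: "\<And>A. B * MA A = MA A * B"
    and saB: "sa B" and inv: "invop B"
  shows "mat_riesz_basis M (\<lambda>k. U (E k))"
proof -
  have bU: "bounded_op M U" by (rule rep_bounded[OF UL rep cm])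
  obtain C where C1: "B * C = 1" and C2: "C * B = 1" using inv by (auto simp: invop_def)
  have bij: "bij_op M U"
    unfolding bij_op_def
  proof (intro conjI ballI impI)
    fix f g :: "'g \<Rightarrow> complex^'r^'s" assume f: "f \<in> L2 M" and g: "g \<in> L2 M" and a: "aeq M (U f) (U g)"
    have "B $$ Phi f = B $$ Phi g" using Phi_aeq[OF UL[OF f] UL[OF g] a] f g by (simp add: rep)
    then have "C $$ (B $$ Phi f) = C $$ (B $$ Phi g)" by simp
    then have "Phi f = Phi g" using C2 by (metis app_mult app_one)
    then show "aeq M f g" by (rule aeq_Phi[OF f g])
  next
    fix g :: "'g \<Rightarrow> complex^'r^'s" assume g: "g \<in> L2 M"
    define f where "f = Psi (C $$ Phi g)"
    have f: "f \<in> L2 M" unfolding f_def by (rule Psi_L2)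
    have "Phi (U f) = B $$ (C $$ Phi g)" using f by (simp add: rep f_def Phi_Psi)
    also have "\<dots> = Phi g" using C1 by (metis app_mult app_one)
    finally have "aeq M (U f) g" by (rule aeq_Phi[OF UL[OF f] g])
    then show "\<exists>f\<in>L2 M. aeq M (U f) g" using f by blast
  qed
  have hU: "is_hadjoint M U U"
    unfolding is_hadjoint_def using bU rep_hinner[OF UL rep cm saB] by blast
  have mU: "mat_adjointable M U"
    unfolding mat_adjointable_def using hU rep_minner[OF UL rep cm saB] by blast
  show ?thesis
    unfolding mat_riesz_basis_def
    by (intro exI[of _ E] exI[of _ U] conjI allI onb bU bij mU) (simp add: aeq_def)
qed

lemma main_onb:
  assumes saT: "self_adjoint_op M T" and maT: "mat_adjointable M T"
  shows "mat_riesz_basis M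
           (\<lambda>k. (\<lambda>x. E k x + mscale (1/2) (op_sqrt M (T \<circ> T) (E k) x + T (E k) x)))
       \<and> mat_riesz_basis M
           (\<lambda>k. (\<lambda>x. E k x + mscale (1/2) (op_sqrt M (T \<circ> T) (E k) x - T (E k) x)))"
proof -
  have bT: "bounded_op M T" and hT: "\<And>f g. f \<in> L2 M \<Longrightarrow> g \<in> L2 M \<Longrightarrow> hinner M (T f) g = hinner M f (T g)"
    using saT by (auto simp: self_adjoint_op_def is_hadjoint_def)
  obtain S' where hS': "is_hadjoint M T S'" and mS': "\<And>f g. f \<in> L2 M \<Longrightarrow> g \<in> L2 M \<Longrightarrow> minner M (T f) g = minner M f (S' g)"
    using maT unfolding mat_adjointable_def by blast
  have bS': "bounded_op M S'" using hS' by (simp add: is_hadjoint_def)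
  have TL: "\<And>f. f \<in> L2 M \<Longrightarrow> T f \<in> L2 M" by (rule bop_D(1)[OF bT])
  define TH where "TH = opH T"
  have TH_app: "\<And>f. f \<in> L2 M \<Longrightarrow> TH $$ Phi f = Phi (T f)" unfolding TH_def by (rule opH_app[OF bT])
  have saTH: "sa TH"
    unfolding sa_def
  proof (intro allI)
    fix x y
    have "inner (TH $$ Phi (Psi x)) (Phi (Psi y)) = inner (Phi (Psi x)) (TH $$ Phi (Psi y))"
      by (simp add: TH_app Psi_L2 TL inner_Phi[symmetric] hT)
    then show "inner (TH $$ x) y = inner x (TH $$ y)" by (simp add: Phi_Psi)
  qed
  have T_mult: "Phi (T (\<lambda>x. A ** f x)) = mact A (Phi (T f))" if f: "f \<in> L2 M" for A f
  proof (rule seq_inj)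
    have "minner M (T (\<lambda>x. A ** f x)) (E k) = minner M (\<lambda>x. A ** T f x) (E k)" for k
    proof -
      have "minner M (T (\<lambda>x. A ** f x)) (E k) = minner M (\<lambda>x. A ** f x) (S' (E k))"
        by (rule mS') (auto intro: L2_mult f EL)
      also have "\<dots> = A ** minner M f (S' (E k))" by (rule minner_mult_left[OF f bop_D(1)[OF bS' EL]])
      also have "\<dots> = A ** minner M (T f) (E k)" by (simp add: mS'[OF f EL])
      also have "\<dots> = minner M (\<lambda>x. A ** T f x) (E k)" by (rule minner_mult_left[OF TL[OF f] EL, symmetric])
      finally show ?thesis .
    qed
    then show "seq (Phi (T (\<lambda>x. A ** f x))) = seq (mact A (Phi (T f)))"
      using f by (simp add: seq_Phi seq_mact TL L2_mult coef_def fun_eq_iff minner_mult_left EL)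
  qed
  have TH_comm: "TH * MA A = MA A * TH" for A
  proof (rule bop_eqI_Phi)
    fix f :: "'g \<Rightarrow> complex^'r^'s" assume f: "f \<in> L2 M"
    show "(TH * MA A) $$ Phi f = (MA A * TH) $$ Phi f"
      using f by (simp add: Phi_mult[symmetric] TH_app L2_mult T_mult TL)
  qed
  obtain R where pR: "pos R" and RR: "R * R = TH * TH"
    and cR: "\<And>U. U * (TH * TH) = (TH * TH) * U \<Longrightarrow> U * R = R * U"
    using sqrt_exists[OF saTH] by blast
  have R_comm: "R * MA A = MA A * R" for A
  proof -
    have "MA A * (TH * TH) = (TH * TH) * MA A" by (metis TH_comm mult.assoc)
    then show ?thesis using cR by metis
  qed
  have saR: "sa R" using pR by (simp add: pos_def)
  define Rop where "Rop f = Psi (R $$ Phi f)" for f :: "'g \<Rightarrow> complex^'r^'s"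
  have RL: "\<And>f. f \<in> L2 M \<Longrightarrow> Rop f \<in> L2 M" by (simp add: Rop_def Psi_L2)
  have Rrep: "\<And>f. f \<in> L2 M \<Longrightarrow> Phi (Rop f) = R $$ Phi f" by (simp add: Rop_def Phi_Psi)
  have bR: "bounded_op M Rop" by (rule rep_bounded[OF RL Rrep R_comm])
  have hR: "\<And>f g. f \<in> L2 M \<Longrightarrow> g \<in> L2 M \<Longrightarrow> hinner M (Rop f) g = hinner M f (Rop g)"
    by (rule rep_hinner[OF RL Rrep R_comm saR])
  have sqR: "is_op_sqrt M (T \<circ> T) Rop"
    unfolding is_op_sqrt_def positive_op_def self_adjoint_op_def is_hadjoint_def
  proof (intro conjI ballI bR)
    show "hinner M (Rop f) g = hinner M f (Rop g)" if "f \<in> L2 M" "g \<in> L2 M" for f g :: "'g \<Rightarrow> complex^'r^'s"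
      using hR that .
    fix f :: "'g \<Rightarrow> complex^'r^'s" assume f: "f \<in> L2 M"
    have "hinner M (Rop f) f = cnj (hinner M (Rop f) f)"
      using hR[OF f f] hinner_swap[OF RL[OF f] f] by simp
    then show "Im (hinner M (Rop f) f) = 0" by (metis cnj.simps(2) complex_cnj_cancel_iff neg_equal_zero)
    show "0 \<le> Re (hinner M (Rop f) f)"
      using pR f by (simp add: inner_Phi RL Rrep pos_def)
    show "aeq M (Rop (Rop f)) ((T \<circ> T) f)"
    proof (rule aeq_Phi)
      show "Rop (Rop f) \<in> L2 M" using f by (simp add: RL)
      show "(T \<circ> T) f \<in> L2 M" using f by (simp add: TL)
      have "Phi (Rop (Rop f)) = (R * R) $$ Phi f" using f by (simp add: Rrep RL)
      also have "\<dots> = Phi (T (T f))" using f by (simp add: RR TH_app TL)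
      finally show "Phi (Rop (Rop f)) = Phi ((T \<circ> T) f)" by simp
    qed
  qed
  define S where "S = op_sqrt M (T \<circ> T)"
  have sqS: "is_op_sqrt M (T \<circ> T) S"
    unfolding S_def op_sqrt_def by (rule someI[where P="is_op_sqrt M (T \<circ> T)", OF sqR])
  have bS: "bounded_op M S" and hS: "\<And>f g. f \<in> L2 M \<Longrightarrow> g \<in> L2 M \<Longrightarrow> hinner M (S f) g = hinner M f (S g)"
    and pS: "\<And>f. f \<in> L2 M \<Longrightarrow> 0 \<le> Re (hinner M (S f) f)"
    and SS: "\<And>f. f \<in> L2 M \<Longrightarrow> aeq M (S (S f)) (T (T f))"
    using sqS by (auto simp: is_op_sqrt_def positive_op_def self_adjoint_op_def is_hadjoint_def)
  have SL: "\<And>f. f \<in> L2 M \<Longrightarrow> S f \<in> L2 M" by (rule bop_D(1)[OF bS])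
  define SH where "SH = opH S"
  have SH_app: "\<And>f. f \<in> L2 M \<Longrightarrow> SH $$ Phi f = Phi (S f)" unfolding SH_def by (rule opH_app[OF bS])
  have posSH: "pos SH"
    unfolding pos_def sa_def
  proof (intro conjI allI)
    fix x y
    have "inner (SH $$ Phi (Psi x)) (Phi (Psi y)) = inner (Phi (Psi x)) (SH $$ Phi (Psi y))"
      by (simp add: SH_app Psi_L2 SL inner_Phi[symmetric] hS)
    then show "inner (SH $$ x) y = inner x (SH $$ y)" by (simp add: Phi_Psi)
    have "0 \<le> inner (SH $$ Phi (Psi x)) (Phi (Psi x))"
      by (simp add: SH_app Psi_L2 SL inner_Phi[symmetric] pS)
    then show "0 \<le> inner (SH $$ x) x" by (simp add: Phi_Psi)
  qed
  have SHSH: "SH * SH = TH * TH"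
  proof (rule bop_eqI_Phi)
    fix f :: "'g \<Rightarrow> complex^'r^'s" assume f: "f \<in> L2 M"
    have "(SH * SH) $$ Phi f = Phi (S (S f))" using f by (simp add: SH_app SL)
    also have "\<dots> = Phi (T (T f))" by (rule Phi_aeq[OF SL[OF SL[OF f]] TL[OF TL[OF f]] SS[OF f]])
    also have "\<dots> = (TH * TH) $$ Phi f" using f by (simp add: TH_app TL)
    finally show "(SH * SH) $$ Phi f = (TH * TH) $$ Phi f" .
  qed
  note AM = abstract_main[OF saTH posSH SHSH]
  have SH_comm: "SH * MA A = MA A * SH" for A
    using AM(1)[of "MA A"] TH_comm[of A] by metis
  have saSH: "sa SH" using posSH by (simp add: pos_def)
  have mact_half: "mact (mat (1/2)) x = (1/2::real) *\<^sub>R x" for x :: "'s ell2"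
    using mact_of_real[of "1/2" x] by simp
  have r1: "mat_riesz_basis M (\<lambda>k. (\<lambda>f x. f x + mscale (1/2) (S f x + T f x)) (E k))"
  proof (rule riesz_from)
    show "(\<lambda>x. f x + mscale (1/2) (S f x + T f x)) \<in> L2 M" if "f \<in> L2 M" for f
      using that by (intro L2_add L2_mscale SL TL)
    show "Phi (\<lambda>x. f x + mscale (1/2) (S f x + T f x)) = (1 + (1/2) *\<^sub>R (SH + TH)) $$ Phi f"
      if f: "f \<in> L2 M" for f
    proof -
      have "Phi (\<lambda>x. f x + mscale (1/2) (S f x + T f x)) = Phi f + Phi (\<lambda>x. mscale (1/2) (S f x + T f x))"
        using f by (intro Phi_add L2_mscale L2_add SL TL)
      also have "Phi (\<lambda>x. mscale (1/2) (S f x + T f x)) = mact (mat (1/2)) (Phi (\<lambda>x. S f x + T f x))"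
        using f by (intro Phi_mscale L2_add SL TL)
      also have "Phi (\<lambda>x. S f x + T f x) = SH $$ Phi f + TH $$ Phi f"
        using f by (simp add: Phi_add SL TL SH_app TH_app)
      finally show ?thesis by (simp add: mact_half)
    qed
    show "(1 + (1/2) *\<^sub>R (SH + TH)) * MA A = MA A * (1 + (1/2) *\<^sub>R (SH + TH))" for A
      by (simp add: algebra_simps SH_comm TH_comm)
    show "sa (1 + (1/2) *\<^sub>R (SH + TH))" by (intro sa_add sa_one sa_scaleR saSH saTH)
    show "invop (1 + (1/2) *\<^sub>R (SH + TH))" by (rule AM(2))
  qed
  have r2: "mat_riesz_basis M (\<lambda>k. (\<lambda>f x. f x + mscale (1/2) (S f x - T f x)) (E k))"
  proof (rule riesz_from)
    show "(\<lambda>x. f x + mscale (1/2) (S f x - T f x)) \<in> L2 M" if "f \<in> L2 M" for f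
      using that by (intro L2_add L2_mscale L2_diff SL TL)
    show "Phi (\<lambda>x. f x + mscale (1/2) (S f x - T f x)) = (1 + (1/2) *\<^sub>R (SH - TH)) $$ Phi f"
      if f: "f \<in> L2 M" for f
    proof -
      have "Phi (\<lambda>x. f x + mscale (1/2) (S f x - T f x)) = Phi f + Phi (\<lambda>x. mscale (1/2) (S f x - T f x))"
        using f by (intro Phi_add L2_mscale L2_diff SL TL)
      also have "Phi (\<lambda>x. mscale (1/2) (S f x - T f x)) = mact (mat (1/2)) (Phi (\<lambda>x. S f x - T f x))"
        using f by (intro Phi_mscale L2_diff SL TL)
      also have "Phi (\<lambda>x. S f x - T f x) = SH $$ Phi f - TH $$ Phi f"
        using f by (simp add: Phi_diff SL TL SH_app TH_app)
      finally show ?thesis by (simp add: mact_half)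
    qed
    show "(1 + (1/2) *\<^sub>R (SH - TH)) * MA A = MA A * (1 + (1/2) *\<^sub>R (SH - TH))" for A
      by (simp add: algebra_simps SH_comm TH_comm)
    show "sa (1 + (1/2) *\<^sub>R (SH - TH))" by (intro sa_add sa_one sa_scaleR sa_diff saSH saTH)
    show "invop (1 + (1/2) *\<^sub>R (SH - TH))" by (rule AM(3))
  qed
  show ?thesis using r1 r2 by (simp add: S_def)
qed

end

theorem theorem3p15:
  fixes M :: "'g::{topological_ab_group_add,t2_space} measure"
    and T :: "('g \<Rightarrow> complex^'r::finite^'s::finite) \<Rightarrow> ('g \<Rightarrow> complex^'r^'s)"
    and E :: "nat \<Rightarrow> 'g \<Rightarrow> complex^'r^'s"
  assumes "sigma_compact_group TYPE('g)"
    and "haar_measure M"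
    and "self_adjoint_op M T"
    and "mat_adjointable M T"
    and "mat_onb M E"
  shows "mat_riesz_basis M
           (\<lambda>k. (\<lambda>x. E k x + mscale (1/2) (op_sqrt M (T \<circ> T) (E k) x + T (E k) x)))
       \<and> mat_riesz_basis M
           (\<lambda>k. (\<lambda>x. E k x + mscale (1/2) (op_sqrt M (T \<circ> T) (E k) x - T (E k) x)))"
  using onbc.main_onb[OF onbc.intro[OF assms(5)] assms(3) assms(4)] .


end
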